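(* Let $\mathbb F$ be a field of characteristic $2$, let $S=\{R_0,\dots,R_d\}$ be a quasi-thin scheme on $X$, $x\in X$, $\mathcal T=\mathcal T(x)$, and $E_a^*=E_a^*(x)$. Then the Jacobson radical of $\mathcal T$ equals $$\mathcal J_1=\bigl\langle \{E_a^*JE_b^*: R_a,R_b\in S,\ \max\{k_a,k_b\}=2\}\bigr\rangle_{\mathbb F},$$ where $J$ is the all-ones matrix.
   Context: Let $X$ be a nonempty finite set. A scheme of class $d$ on $X$ is a partition $S=\{R_0,\dots,R_d\}$ of $X\times X$ into nonempty sets such that $R_0=\{(b,b):b\in X\}$; for each $c$ there is $c'$ with $R_{c'}=\{(f,e):(e,f)\in R_c\}$; and for all $i,j,k$ the intersection number $p_{ij}^k=|\{\ell\in X:(m,\ell)\in R_i,(\ell,n)\in R_j\}|$ does not depend on $(m,n)\in R_k$. The valency of $R_a$ is $k_a=p_{aa'}^0$; $S$ is quasi-thin if all $k_a\le 2$. For $y\in X$, $yR_a=\{z:(y,z)\in R_a\}$. $A_a\in M_X(\mathbb F)$ is the $(0,1)$ adjacency matrix of $R_a$ and $E_a^*(y)$ is the diagonal $(0,1)$-matrix with ones exactly at positions indexed by $yR_a$. The Terwilliger $\mathbb F$-algebra $\mathcal T(y)$ is the $\mathbb F$-subalgebra of $M_X(\mathbb F)$ generated by $A_0,\dots,A_d,E_0^*(y),\dots,E_d^*(y)$. $\langle Y\rangle_{\mathbb F}$ denotes $\mathbb F$-linear span (the zero space if $Y$ is empty). *)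

theory Defs
  imports Main
begin

text \<open>Matrices over a field indexed by a finite type 'x (the set X is UNIV :: 'x set).\<close>
type_synonym ('x, 'f) mat = "'x \<Rightarrow> 'x \<Rightarrow> 'f"

definition mmul :: "('x::finite, 'f::field) mat \<Rightarrow> ('x, 'f) mat \<Rightarrow> ('x, 'f) mat" where
  "mmul A B = (\<lambda>i j. \<Sum>k\<in>UNIV. A i k * B k j)"

definition madd :: "('x, 'f::field) mat \<Rightarrow> ('x, 'f) mat \<Rightarrow> ('x, 'f) mat" where
  "madd A B = (\<lambda>i j. A i j + B i j)"

definition msmult :: "'f::field \<Rightarrow> ('x, 'f) mat \<Rightarrow> ('x, 'f) mat" where
  "msmult c A = (\<lambda>i j. c * A i j)"

definition mzero :: "('x, 'f::field) mat" where
  "mzero = (\<lambda>i j. 0)"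

definition mone :: "('x, 'f::field) mat" where
  "mone = (\<lambda>i j. if i = j then 1 else 0)"

definition all_ones :: "('x, 'f::field) mat" where
  "all_ones = (\<lambda>i j. 1)"

definition mspan :: "('x::finite, 'f::field) mat set \<Rightarrow> ('x, 'f) mat set" where
  "mspan Y = {M. \<exists>S c. finite S \<and> S \<subseteq> Y \<and> M = (\<lambda>i j. \<Sum>y\<in>S. c y * y i j)}"

definition is_scheme :: "(nat \<Rightarrow> ('x::finite \<times> 'x) set) \<Rightarrow> nat \<Rightarrow> bool" where
  "is_scheme R d \<longleftrightarrow>
     (\<forall>i\<le>d. R i \<noteq> {}) \<and>
     (\<forall>i\<le>d. \<forall>j\<le>d. i \<noteq> j \<longrightarrow> R i \<inter> R j = {}) \<and>
     (\<Union>i\<in>{0..d}. R i) = UNIV \<and>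
     R 0 = {(b, b) | b. True} \<and>
     (\<forall>c\<le>d. \<exists>c'\<le>d. R c' = {(f, e). (e, f) \<in> R c}) \<and>
     (\<forall>i\<le>d. \<forall>j\<le>d. \<forall>k\<le>d. \<forall>m n m' n'. (m, n) \<in> R k \<longrightarrow> (m', n') \<in> R k \<longrightarrow>
        card {l. (m, l) \<in> R i \<and> (l, n) \<in> R j} = card {l. (m', l) \<in> R i \<and> (l, n') \<in> R j})"

text \<open>Intersection number p_{ij}^k, evaluated at some pair (m,n) in R k.\<close>
definition inter_num :: "(nat \<Rightarrow> ('x::finite \<times> 'x) set) \<Rightarrow> nat \<Rightarrow> nat \<Rightarrow> nat \<Rightarrow> nat" where
  "inter_num R i j k = (let (m, n) = (SOME p. p \<in> R k) in card {l. (m, l) \<in> R i \<and> (l, n) \<in> R j})"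

definition conv_idx :: "(nat \<Rightarrow> ('x::finite \<times> 'x) set) \<Rightarrow> nat \<Rightarrow> nat \<Rightarrow> nat" where
  "conv_idx R d c = (SOME c'. c' \<le> d \<and> R c' = {(f, e). (e, f) \<in> R c})"

definition valency :: "(nat \<Rightarrow> ('x::finite \<times> 'x) set) \<Rightarrow> nat \<Rightarrow> nat \<Rightarrow> nat" where
  "valency R d a = inter_num R a (conv_idx R d a) 0"

definition quasi_thin :: "(nat \<Rightarrow> ('x::finite \<times> 'x) set) \<Rightarrow> nat \<Rightarrow> bool" where
  "quasi_thin R d \<longleftrightarrow> (\<forall>a\<le>d. valency R d a \<le> 2)"

definition adj :: "(nat \<Rightarrow> ('x::finite \<times> 'x) set) \<Rightarrow> nat \<Rightarrow> ('x, 'f::field) mat" where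
  "adj R a = (\<lambda>i j. if (i, j) \<in> R a then 1 else 0)"

definition dual_idem :: "(nat \<Rightarrow> ('x::finite \<times> 'x) set) \<Rightarrow> 'x \<Rightarrow> nat \<Rightarrow> ('x, 'f::field) mat" where
  "dual_idem R y a = (\<lambda>i j. if i = j \<and> (y, i) \<in> R a then 1 else 0)"

inductive_set gen_alg :: "('x::finite, 'f::field) mat set \<Rightarrow> ('x, 'f) mat set"
  for G where
    gen: "A \<in> G \<Longrightarrow> A \<in> gen_alg G"
  | one: "mone \<in> gen_alg G"
  | zero: "mzero \<in> gen_alg G"
  | add: "A \<in> gen_alg G \<Longrightarrow> B \<in> gen_alg G \<Longrightarrow> madd A B \<in> gen_alg G"
  | smult: "A \<in> gen_alg G \<Longrightarrow> msmult c A \<in> gen_alg G"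
  | mult: "A \<in> gen_alg G \<Longrightarrow> B \<in> gen_alg G \<Longrightarrow> mmul A B \<in> gen_alg G"

definition terwilliger :: "(nat \<Rightarrow> ('x::finite \<times> 'x) set) \<Rightarrow> nat \<Rightarrow> 'x \<Rightarrow> ('x, 'f::field) mat set" where
  "terwilliger R d y = gen_alg ({adj R a | a. a \<le> d} \<union> {dual_idem R y a | a. a \<le> d})"

definition left_ideal :: "('x::finite, 'f::field) mat set \<Rightarrow> ('x, 'f) mat set \<Rightarrow> bool" where
  "left_ideal T L \<longleftrightarrow> L \<subseteq> T \<and> mzero \<in> L \<and>
     (\<forall>A\<in>L. \<forall>B\<in>L. madd A B \<in> L) \<and>
     (\<forall>A\<in>L. msmult (-1) A \<in> L) \<and>
     (\<forall>t\<in>T. \<forall>A\<in>L. mmul t A \<in> L)"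

definition maximal_left_ideal :: "('x::finite, 'f::field) mat set \<Rightarrow> ('x, 'f) mat set \<Rightarrow> bool" where
  "maximal_left_ideal T L \<longleftrightarrow> left_ideal T L \<and> L \<noteq> T \<and>
     (\<forall>L'. left_ideal T L' \<and> L \<subseteq> L' \<longrightarrow> L' = L \<or> L' = T)"

definition jacobson_radical :: "('x::finite, 'f::field) mat set \<Rightarrow> ('x, 'f) mat set" where
  "jacobson_radical T = T \<inter> \<Inter> {L. maximal_left_ideal T L}"

end

theory Submission
  imports Defs
begin


definition mv :: "('x::finite, 'f::field) mat \<Rightarrow> ('x \<Rightarrow> 'f) \<Rightarrow> ('x \<Rightarrow> 'f)" where
  "mv A v = (\<lambda>i. \<Sum>k\<in>UNIV. A i k * v k)"

lemma ifmul1: "(if P then 1 else 0) * (a::'a::semiring_1) = (if P then a else 0)" by simp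
lemma ifmul2: "(a::'a::semiring_1) * (if P then 1 else 0) = (if P then a else 0)" by simp

lemma mv_mone: "mv mone v = v"
  by (intro ext) (simp add: mv_def mone_def ifmul1)

lemma mv_mzero: "mv mzero v = (\<lambda>_. 0)"
  by (simp add: mv_def mzero_def)

lemma mv_madd: "mv (madd A B) v = (\<lambda>i. mv A v i + mv B v i)"
  by (simp add: mv_def madd_def distrib_right sum.distrib)

lemma mv_msmult: "mv (msmult c A) v = (\<lambda>i. c * mv A v i)"
  by (simp add: mv_def msmult_def sum_distrib_left mult.assoc)

lemma mv_mmul: "mv (mmul A B) v = mv A (mv B v)"
proof
  fix i
  have "mv (mmul A B) v i = (\<Sum>k\<in>UNIV. \<Sum>l\<in>UNIV. A i l * B l k * v k)"
    by (simp add: mv_def mmul_def sum_distrib_right)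
  also have "\<dots> = (\<Sum>l\<in>UNIV. \<Sum>k\<in>UNIV. A i l * (B l k * v k))"
    by (subst sum.swap) (simp add: mult.assoc)
  also have "\<dots> = mv A (mv B v) i"
    by (simp add: mv_def sum_distrib_left)
  finally show "mv (mmul A B) v i = mv A (mv B v) i" .
qed

lemma mmul_col: "mmul A B i j = mv A (\<lambda>k. B k j) i"
  by (simp add: mmul_def mv_def)

lemma mmul_assoc: "mmul (mmul A B) C = mmul A (mmul B C)"
  by (intro ext) (simp only: mmul_col mv_mmul)

lemma mmul_mone_left: "mmul mone A = A"
  by (intro ext) (simp add: mmul_col mv_mone)

lemma mmul_mone_right: "mmul A mone = A"
  by (intro ext) (simp add: mmul_def mone_def ifmul2)

lemma mmul_mzero_left: "mmul mzero A = mzero"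
  by (intro ext) (simp add: mmul_def mzero_def)

lemma mmul_madd_left: "mmul (madd A B) C = madd (mmul A C) (mmul B C)"
  by (intro ext) (simp add: mmul_def madd_def distrib_right sum.distrib)

lemma mmul_madd_right: "mmul C (madd A B) = madd (mmul C A) (mmul C B)"
  by (intro ext) (simp add: mmul_def madd_def distrib_left sum.distrib)

lemma mmul_msmult_left: "mmul (msmult c A) B = msmult c (mmul A B)"
  by (intro ext) (simp add: mmul_def msmult_def sum_distrib_left mult.assoc)

lemma mmul_msmult_right: "mmul A (msmult c B) = msmult c (mmul A B)"
  by (intro ext) (simp add: mmul_def msmult_def sum_distrib_left mult.left_commute)

lemma mmul_smone: "mmul (msmult c mone) A = msmult c A"
  by (simp add: mmul_msmult_left mmul_mone_left)

lemma gen_alg_stable: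
  assumes "s \<in> gen_alg G" "P v"
    and P0: "P (\<lambda>_. 0)" and Padd: "\<And>u w. P u \<Longrightarrow> P w \<Longrightarrow> P (\<lambda>i. u i + w i)"
    and Psm: "\<And>c u. P u \<Longrightarrow> P (\<lambda>i. c * u i)"
    and Pg: "\<And>g u. g \<in> G \<Longrightarrow> P u \<Longrightarrow> P (mv g u)"
  shows "P (mv s v)"
  using assms(1,2)
proof (induction arbitrary: v rule: gen_alg.induct)
  case (gen A) then show ?case by (intro Pg)
next
  case one then show ?case by (simp add: mv_mone)
next
  case zero then show ?case by (simp add: mv_mzero P0)
next
  case (add A B) then show ?case by (simp add: mv_madd Padd)
next
  case (smult A c) then show ?case by (simp add: mv_msmult Psm)
next
  case (mult A B) then show ?case by (simp add: mv_mmul)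
qed

lemma gen_alg_stable_mat:
  assumes "s \<in> gen_alg G" "P q"
    and P0: "P mzero" and Padd: "\<And>u w. P u \<Longrightarrow> P w \<Longrightarrow> P (madd u w)"
    and Psm: "\<And>c u. P u \<Longrightarrow> P (msmult c u)"
    and Pg: "\<And>g u. g \<in> G \<Longrightarrow> P u \<Longrightarrow> P (mmul g u)"
  shows "P (mmul s q)"
  using assms(1,2)
proof (induction arbitrary: q rule: gen_alg.induct)
  case (gen A) then show ?case by (intro Pg)
next
  case one then show ?case by (simp add: mmul_mone_left)
next
  case zero then show ?case by (simp add: mmul_mzero_left P0)
next
  case (add A B) then show ?case by (simp add: mmul_madd_left Padd)
next
  case (smult A c) then show ?case by (simp add: mmul_msmult_left Psm)
next
  case (mult A B) then show ?case by (simp add: mmul_assoc)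
qed

lemma lincomb_closed:
  assumes "mzero \<in> Z" "\<And>A B. A \<in> Z \<Longrightarrow> B \<in> Z \<Longrightarrow> madd A B \<in> Z"
    "\<And>c A. A \<in> Z \<Longrightarrow> msmult c A \<in> Z"
    "finite S" "S \<subseteq> Z"
  shows "(\<lambda>i j. \<Sum>y\<in>S. c y * y i j) \<in> Z"
  using assms(4,5)
proof (induction S rule: finite_induct)
  case empty then show ?case using assms(1) by (simp add: mzero_def)
next
  case (insert a S)
  have "(\<lambda>i j. \<Sum>y\<in>insert a S. c y * y i j) = madd (msmult (c a) a) (\<lambda>i j. \<Sum>y\<in>S. c y * y i j)"
    using insert by (simp add: madd_def msmult_def)
  then show ?case using insert assms(2,3) by simp
qed

lemma mspan_sub:
  assumes "mzero \<in> Z" "\<And>A B. A \<in> Z \<Longrightarrow> B \<in> Z \<Longrightarrow> madd A B \<in> Z"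
    "\<And>c A. A \<in> Z \<Longrightarrow> msmult c A \<in> Z" "Y \<subseteq> Z"
  shows "mspan Y \<subseteq> Z"
  using lincomb_closed[OF assms(1-3)] assms(4) unfolding mspan_def by blast

lemma char2_of_nat:
  assumes "(2::'f::field) = 0"
  shows "(of_nat n :: 'f) = (if even n then 0 else 1)"
proof (cases "even n")
  case True then obtain k where "n = 2*k" by blast
  then show ?thesis using assms by simp
next
  case False then obtain k where "n = 2*k+1" using oddE by blast
  then show ?thesis using assms by simp
qed

lemma char2_neg:
  assumes "(2::'f::field) = 0"
  shows "- (a::'f) = a"
proof -
  have "a + a = 2 * a" by simp
  then have "a + a = 0" using assms by simp
  then show ?thesis by (simp add: add_eq_0_iff)
qed

lemma char2_eq: assumes "(2::'f::field) = 0" shows "((a::'f) + b = 0) = (a = b)"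
proof -
  have "(a + b = 0) = (a = - b)" by (simp add: eq_neg_iff_add_eq_0)
  then show ?thesis using char2_neg[OF assms, of b] by simp
qed



locale qts =
  fixes R :: "nat \<Rightarrow> ('x::finite \<times> 'x) set" and d :: nat and x :: 'x
  assumes sch: "is_scheme R d" and qt: "quasi_thin R d"
begin

lemmas schp = sch[unfolded is_scheme_def]
lemmas S1 = conjunct1[OF schp]
lemmas S2 = conjunct1[OF conjunct2[OF schp]]
lemmas S3 = conjunct1[OF conjunct2[OF conjunct2[OF schp]]]
lemmas R0 = conjunct1[OF conjunct2[OF conjunct2[OF conjunct2[OF schp]]]]
lemmas S5 = conjunct1[OF conjunct2[OF conjunct2[OF conjunct2[OF conjunct2[OF schp]]]]]
lemmas S6 = conjunct2[OF conjunct2[OF conjunct2[OF conjunct2[OF conjunct2[OF schp]]]]]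

lemma ne: "i \<le> d \<Longrightarrow> R i \<noteq> {}" using S1 by simp
lemma disj: "i \<le> d \<Longrightarrow> j \<le> d \<Longrightarrow> p \<in> R i \<Longrightarrow> p \<in> R j \<Longrightarrow> i = j"
  using S2 by blast
lemma cover: "\<exists>i\<le>d. p \<in> R i"
proof -
  have "p \<in> (\<Union>i\<in>{0..d}. R i)" using S3 by simp
  then show ?thesis by auto
qed
lemma reg: "i \<le> d \<Longrightarrow> j \<le> d \<Longrightarrow> k \<le> d \<Longrightarrow> (m, n) \<in> R k \<Longrightarrow> (m', n') \<in> R k \<Longrightarrow>
   card {l. (m, l) \<in> R i \<and> (l, n) \<in> R j} = card {l. (m', l) \<in> R i \<and> (l, n') \<in> R j}"
  using S6 by blast

definition cv where "cv c = conv_idx R d c"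
lemma cv: assumes "c \<le> d" shows "cv c \<le> d" "R (cv c) = {(f, e). (e, f) \<in> R c}"
proof -
  have "\<exists>c'. c' \<le> d \<and> R c' = {(f, e). (e, f) \<in> R c}" using S5 assms by blast
  from someI_ex[OF this] show "cv c \<le> d" "R (cv c) = {(f, e). (e, f) \<in> R c}"
    unfolding cv_def conv_idx_def by auto
qed
lemma cv_mem: "c \<le> d \<Longrightarrow> ((a, b) \<in> R (cv c)) = ((b, a) \<in> R c)" using cv by auto

definition rel where "rel p = (THE c. c \<le> d \<and> p \<in> R c)"
lemma rel: "rel p \<le> d \<and> p \<in> R (rel p)"
proof -
  obtain i where "i \<le> d" "p \<in> R i" using cover by blast
  then have "\<exists>!c. c \<le> d \<and> p \<in> R c" using disj by blast
  then show ?thesis unfolding rel_def by (rule theI')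
qed
lemma rel_unique: "c \<le> d \<Longrightarrow> p \<in> R c \<Longrightarrow> rel p = c" using rel disj by blast

definition blk where "blk y = rel (x, y)"
definition Bl where "Bl a = {y. (x, y) \<in> R a}"
definition K where "K a = card (Bl a)"
definition rep where "rep a = (SOME y. y \<in> Bl a)"

lemma blk: "blk y \<le> d" "y \<in> Bl (blk y)" using rel unfolding blk_def Bl_def by auto
lemma Bl_iff: "a \<le> d \<Longrightarrow> (y \<in> Bl a) = (blk y = a)"
  using rel_unique rel unfolding blk_def Bl_def by blast

lemma R0_mem: "((m, n) \<in> R 0) = (m = n)" using R0 by auto

lemma cnt_diag: assumes "a \<le> d"
  shows "card {l. (m, l) \<in> R a \<and> (l, m) \<in> R (cv a)} = K a"
proof -
  have "card {l. (m, l) \<in> R a \<and> (l, m) \<in> R (cv a)} = card {l. (x, l) \<in> R a \<and> (l, x) \<in> R (cv a)}"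
    by (rule reg[of a "cv a" 0]) (use assms cv in \<open>auto simp: R0_mem\<close>)
  also have "{l. (x, l) \<in> R a \<and> (l, x) \<in> R (cv a)} = Bl a" using cv_mem assms unfolding Bl_def by auto
  finally show ?thesis unfolding K_def .
qed

lemma valency_K: assumes "a \<le> d" shows "valency R d a = K a"
proof -
  obtain m n where mn: "(SOME p. p \<in> R 0) = (m, n)" by (cases "SOME p. p \<in> R 0") auto
  have "(x, x) \<in> R 0" by (simp add: R0_mem)
  then have "(SOME p. p \<in> R 0) \<in> R 0" by (rule someI)
  then have "m = n" using mn by (simp add: R0_mem)
  then show ?thesis unfolding valency_def inter_num_def using mn cnt_diag[OF assms, of m]
    by (simp add: cv_def)
qed

lemma K_pos: assumes "a \<le> d" shows "K a \<ge> 1"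
proof -
  obtain m n where "(m, n) \<in> R a" using ne[OF assms] by auto
  then have "n \<in> {l. (m, l) \<in> R a \<and> (l, m) \<in> R (cv a)}" using cv_mem assms by auto
  then have "card {l. (m, l) \<in> R a \<and> (l, m) \<in> R (cv a)} \<ge> 1"
    by (metis One_nat_def Suc_leI card_gt_0_iff empty_iff finite)
  then show ?thesis using cnt_diag[OF assms] by simp
qed

lemma K_le: "a \<le> d \<Longrightarrow> K a \<le> 2" using qt valency_K unfolding quasi_thin_def by auto
lemma K12: "a \<le> d \<Longrightarrow> K a = 1 \<or> K a = 2" using K_pos K_le by fastforce

lemma rep: "a \<le> d \<Longrightarrow> rep a \<in> Bl a"
proof -
  assume "a \<le> d"
  then have "Bl a \<noteq> {}" using K_pos[of a] unfolding K_def by auto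
  then show ?thesis unfolding rep_def by (simp add: some_in_eq)
qed
lemma blk_rep: "a \<le> d \<Longrightarrow> blk (rep a) = a" using rep Bl_iff by blast

lemma K1_single: "a \<le> d \<Longrightarrow> K a = 1 \<Longrightarrow> y \<in> Bl a \<Longrightarrow> Bl a = {y}"
  unfolding K_def by (metis card_1_singletonE singletonD)
lemma K2_pair: "a \<le> d \<Longrightarrow> K a = 2 \<Longrightarrow> y \<in> Bl a \<Longrightarrow> \<exists>y'. y' \<noteq> y \<and> Bl a = {y, y'}"
proof -
  assume a: "a \<le> d" "K a = 2" "y \<in> Bl a"
  then obtain p q where pq: "Bl a = {p, q}" "p \<noteq> q" unfolding K_def by (meson card_2_iff)
  show ?thesis
  proof (cases "y = p")
    case True then show ?thesis using pq by (intro exI[of _ q]) auto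
  next
    case False then have "y = q" using a pq by blast
    then show ?thesis using pq by (intro exI[of _ p]) auto
  qed
qed

definition nn where "nn c y b = card {z \<in> Bl b. (y, z) \<in> R c}"
definition mm where "mm c a z = card {y \<in> Bl a. (y, z) \<in> R c}"

lemma F1: assumes "b \<le> d" "c \<le> d" "blk y = blk y'" shows "nn c y b = nn c y' b"
proof -
  have e: "\<And>y. {z \<in> Bl b. (y, z) \<in> R c} = {l. (x, l) \<in> R b \<and> (l, y) \<in> R (cv c)}"
    using cv_mem[OF assms(2)] unfolding Bl_def by auto
  show ?thesis unfolding nn_def e
  proof (rule reg[of b "cv c" "blk y"])
    show "(x, y') \<in> R (blk y)" using blk(2)[of y'] assms(3) by (simp add: Bl_def)
    show "(x, y) \<in> R (blk y)" using blk(2)[of y] by (simp add: Bl_def)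
  qed (use assms cv blk in auto)
qed

lemma F1': assumes "a \<le> d" "c \<le> d" "blk z = blk z'" shows "mm c a z = mm c a z'"
proof -
  have e: "\<And>z. {y \<in> Bl a. (y, z) \<in> R c} = {l. (x, l) \<in> R a \<and> (l, z) \<in> R c}"
    unfolding Bl_def by auto
  show ?thesis unfolding mm_def e
  proof (rule reg[of a c "blk z"])
    show "(x, z') \<in> R (blk z)" using blk(2)[of z'] assms(3) by (simp add: Bl_def)
    show "(x, z) \<in> R (blk z)" using blk(2)[of z] by (simp add: Bl_def)
  qed (use assms blk in auto)
qed

lemma mm_nn: "c \<le> d \<Longrightarrow> mm c a z = nn (cv c) z a"
  unfolding mm_def nn_def using cv_mem by auto

lemma card_filter_sum: "finite A \<Longrightarrow> card {y \<in> A. P y} = (\<Sum>y\<in>A. if P y then 1 else 0)"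
proof -
  assume f: "finite A"
  have "card {y\<in>A. P y} = (\<Sum>y\<in>{y\<in>A. P y}. 1)" by simp
  also have "\<dots> = (\<Sum>y\<in>A. if P y then 1 else 0)" using f by (rule sum.inter_filter)
  finally show ?thesis .
qed

lemma F2: assumes "a \<le> d" "b \<le> d" "c \<le> d" "y \<in> Bl a" "z \<in> Bl b"
  shows "K a * nn c y b = K b * mm c a z"
proof -
  have "(\<Sum>y'\<in>Bl a. nn c y' b) = (\<Sum>y'\<in>Bl a. nn c y b)"
    using F1 assms Bl_iff by (intro sum.cong) auto
  then have 1: "(\<Sum>y'\<in>Bl a. nn c y' b) = K a * nn c y b" by (simp add: K_def)
  have "(\<Sum>z'\<in>Bl b. mm c a z') = (\<Sum>z'\<in>Bl b. mm c a z)"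
    using F1' assms Bl_iff by (intro sum.cong) auto
  then have 2: "(\<Sum>z'\<in>Bl b. mm c a z') = K b * mm c a z" by (simp add: K_def)
  have "(\<Sum>y'\<in>Bl a. nn c y' b) = (\<Sum>y'\<in>Bl a. \<Sum>z'\<in>Bl b. if (y', z') \<in> R c then 1 else 0)"
    unfolding nn_def by (simp add: card_filter_sum)
  also have "\<dots> = (\<Sum>z'\<in>Bl b. \<Sum>y'\<in>Bl a. if (y', z') \<in> R c then 1 else 0)" by (rule sum.swap)
  also have "\<dots> = (\<Sum>z'\<in>Bl b. mm c a z')"
    unfolding mm_def by (simp add: card_filter_sum)
  finally show ?thesis using 1 2 by simp
qed

definition step where "step a b \<longleftrightarrow> a \<le> d \<and> b \<le> d \<and> K a = 2 \<and> K b = 2 \<and> (\<exists>c\<le>d. odd (nn c (rep a) b))"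

lemma nn_mm_22: assumes "a \<le> d" "b \<le> d" "c \<le> d" "K a = 2" "K b = 2"
  shows "nn c (rep a) b = mm c a (rep b)"
  using F2[OF assms(1-3) rep[OF assms(1)] rep[OF assms(2)]] assms by simp

lemma step_sym: assumes "step a b" shows "step b a"
proof -
  from assms obtain c where c: "a \<le> d" "b \<le> d" "K a = 2" "K b = 2" "c \<le> d" "odd (nn c (rep a) b)"
    unfolding step_def by blast
  then have "odd (nn (cv c) (rep b) a)" using nn_mm_22 mm_nn by simp
  then show ?thesis using c cv unfolding step_def by blast
qed

lemma step_rtr_sym: "step\<^sup>*\<^sup>* a b \<Longrightarrow> step\<^sup>*\<^sup>* b a"
proof (induction rule: rtranclp_induct)
  case base then show ?case by simp
next
  case (step y z) then show ?case using step_sym by (meson converse_rtranclp_into_rtranclp)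
qed

lemma sum_blocks: "(\<Sum>k\<in>UNIV. f k) = (\<Sum>b\<le>d. \<Sum>k\<in>Bl b. f k)"
proof -
  have "(\<Sum>b\<le>d. sum f {k. k \<in> UNIV \<and> blk k = b}) = sum f UNIV"
    by (rule sum.group) (use blk in auto)
  moreover have "\<And>b. b \<in> {..d} \<Longrightarrow> {k. k \<in> UNIV \<and> blk k = b} = Bl b" using Bl_iff by auto
  ultimately show ?thesis by simp
qed

definition bconst :: "('x \<Rightarrow> 'f) \<Rightarrow> bool" where
  "bconst v \<longleftrightarrow> (\<forall>y z. blk y = blk z \<longrightarrow> v y = v z)"

lemma sum_Bl_const: assumes "b \<le> d" "bconst f"
  shows "(\<Sum>k\<in>Bl b. (f k :: 'f::field)) = of_nat (K b) * f (rep b)"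
proof -
  have "(\<Sum>k\<in>Bl b. f k) = (\<Sum>k\<in>Bl b. f (rep b))"
    using assms Bl_iff blk_rep unfolding bconst_def by (intro sum.cong) auto
  then show ?thesis by (simp add: K_def)
qed

lemma sum_Bl_filter: assumes "b \<le> d" "bconst f"
  shows "(\<Sum>k\<in>Bl b. (if (y, k) \<in> R c then f k else (0::'f::field))) = of_nat (nn c y b) * f (rep b)"
proof -
  have "(\<Sum>k\<in>Bl b. (if (y, k) \<in> R c then f k else (0::'f))) = (\<Sum>k\<in>{k \<in> Bl b. (y, k) \<in> R c}. f k)"
    by (simp add: sum.inter_filter)
  also have "\<dots> = (\<Sum>k\<in>{k \<in> Bl b. (y, k) \<in> R c}. f (rep b))"
    using assms Bl_iff blk_rep unfolding bconst_def by (intro sum.cong) auto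
  finally show ?thesis by (simp add: nn_def)
qed

lemma mv_adj: "mv (adj R c) v y = (\<Sum>k\<in>UNIV. if (y, k) \<in> R c then v k else 0)"
  unfolding mv_def adj_def by (auto intro!: sum.cong)

lemma mv_E: "mv (dual_idem R x a) v = (\<lambda>y. if (x, y) \<in> R a then v y else 0)"
proof (intro ext)
  fix y show "mv (dual_idem R x a) v y = (if (x, y) \<in> R a then v y else 0)"
  proof (cases "(x,y) \<in> R a")
    case True
    then show ?thesis unfolding mv_def dual_idem_def by (simp add: ifmul1)
  next
    case False then show ?thesis unfolding mv_def dual_idem_def by simp
  qed
qed

lemma Ac_bc: assumes "bconst v"
  shows "mv (adj R c) v y = (\<Sum>b\<le>d. of_nat (nn c y b) * (v (rep b) :: 'f::field))"
  unfolding mv_adj sum_blocks using sum_Bl_filter assms by (intro sum.cong) auto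

end


context qts begin

lemma T_stable:
  fixes s :: "('x, 'f::field) mat" and v :: "'x \<Rightarrow> 'f"
  assumes "s \<in> terwilliger R d x" "P v"
    and P0: "P (\<lambda>_. 0)" and Padd: "\<And>u w. P u \<Longrightarrow> P w \<Longrightarrow> P (\<lambda>i. u i + w i)"
    and Psm: "\<And>c u. P u \<Longrightarrow> P (\<lambda>i. c * u i)"
    and PA: "\<And>c u. c \<le> d \<Longrightarrow> P u \<Longrightarrow> P (mv (adj R c) u)"
    and PE: "\<And>a u. a \<le> d \<Longrightarrow> P u \<Longrightarrow> P (\<lambda>y. if (x, y) \<in> R a then u y else 0)"
  shows "P (mv s v)"
  using assms(1,2) unfolding terwilliger_def
proof (rule gen_alg_stable[where P=P])
  fix g :: "('x, 'f) mat" and u :: "'x \<Rightarrow> 'f" assume "g \<in> {adj R a |a. a \<le> d} \<union> {dual_idem R x a |a. a \<le> d}" "P u"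
  then show "P (mv g u)" by (auto simp: mv_E intro: PA PE)
qed (use P0 Padd Psm in auto)

lemma T_one: "mone \<in> terwilliger R d x" unfolding terwilliger_def by (rule gen_alg.one)
lemma T_zero: "mzero \<in> terwilliger R d x" unfolding terwilliger_def by (rule gen_alg.zero)
lemma T_mult: "A \<in> terwilliger R d x \<Longrightarrow> B \<in> terwilliger R d x \<Longrightarrow> mmul A B \<in> terwilliger R d x"
  unfolding terwilliger_def by (rule gen_alg.mult)
lemma T_add: "A \<in> terwilliger R d x \<Longrightarrow> B \<in> terwilliger R d x \<Longrightarrow> madd A B \<in> terwilliger R d x"
  unfolding terwilliger_def by (rule gen_alg.add)
lemma T_sm: "A \<in> terwilliger R d x \<Longrightarrow> msmult c A \<in> terwilliger R d x"
  unfolding terwilliger_def by (rule gen_alg.smult)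
lemma T_E: "a \<le> d \<Longrightarrow> dual_idem R x a \<in> terwilliger R d x"
  unfolding terwilliger_def by (rule gen_alg.gen) blast
lemma T_A: "a \<le> d \<Longrightarrow> adj R a \<in> terwilliger R d x"
  unfolding terwilliger_def by (rule gen_alg.gen) blast

lemma mv_zero_vec: "mv A (\<lambda>_. 0) = (\<lambda>_. 0)" by (simp add: mv_def)

lemma mem_R_blk: "a \<le> d \<Longrightarrow> ((x, y) \<in> R a) = (blk y = a)"
proof -
  assume "a \<le> d"
  from Bl_iff[OF this, of y] show ?thesis unfolding Bl_def by simp
qed

lemma bconst_A: assumes "c \<le> d" "bconst v" shows "bconst (mv (adj R c) (v :: 'x \<Rightarrow> 'f::field))"
  unfolding bconst_def
proof (intro allI impI)
  fix y z assume yz: "blk y = blk z"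
  show "mv (adj R c) v y = mv (adj R c) v z"
    unfolding Ac_bc[OF assms(2)]
  proof (intro sum.cong refl)
    fix b assume "b \<in> {..d}"
    then have "nn c y b = nn c z b" using F1[OF _ assms(1) yz] by simp
    then show "of_nat (nn c y b) * v (rep b) = of_nat (nn c z b) * v (rep b)" by simp
  qed
qed

lemma bconst_E: assumes "a \<le> d" "bconst v"
  shows "bconst (\<lambda>y. if (x, y) \<in> R a then v y else 0)"
  using assms unfolding bconst_def by (simp add: mem_R_blk)

lemma char2_nat0: assumes "(2::'f::field) = 0" "even n" shows "(of_nat n :: 'f) = 0"
  using char2_of_nat[OF assms(1), of n] assms(2) by simp
lemma char2_nat1: assumes "(2::'f::field) = 0" "odd n" shows "(of_nat n :: 'f) = 1"
  using char2_of_nat[OF assms(1), of n] assms(2) by simp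

lemma nn_even_12: assumes "b \<le> d" "c \<le> d" "K (blk y) = 1" "K b = 2"
  shows "even (nn c y b)"
  using F2[OF blk(1) assms(1,2) blk(2)[of y] rep[OF assms(1)]] assms by simp

lemma mm_even_21: assumes "a \<le> d" "b \<le> d" "c \<le> d" "K a = 2" "K b = 1"
  shows "even (mm c a (rep b))"
proof -
  have "2 * nn c (rep a) b = mm c a (rep b)"
    using F2[OF assms(1,2,3) rep[OF assms(1)] rep[OF assms(2)]] assms by simp
  then show ?thesis by (metis dvd_triv_left)
qed

lemma bconst_0: "bconst (\<lambda>_. 0)" unfolding bconst_def by simp
lemma bconst_add: assumes "bconst u" "bconst w" shows "bconst (\<lambda>i. u i + w i)"
  unfolding bconst_def
proof (intro allI impI)
  fix y z assume "blk y = blk z"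
  with assms have "u y = u z" "w y = w z" unfolding bconst_def by blast+
  then show "u y + w y = u z + w z" by simp
qed
lemma bconst_sm: assumes "bconst u" shows "bconst (\<lambda>i. c * u i)"
  unfolding bconst_def
proof (intro allI impI)
  fix y z assume "blk y = blk z"
  with assms have "u y = u z" unfolding bconst_def by blast
  then show "c * u y = c * u z" by simp
qed

definition inM :: "('x \<Rightarrow> 'f::field) \<Rightarrow> bool" where
  "inM v \<longleftrightarrow> bconst v \<and> (\<forall>y. K (blk y) = 1 \<longrightarrow> v y = 0)"

lemma inM_A: assumes c2: "(2::'f::field) = 0" and "c \<le> d" "inM v"
  shows "inM (mv (adj R c) (v :: 'x \<Rightarrow> 'f))"
  unfolding inM_def
proof (intro conjI allI impI)
  show "bconst (mv (adj R c) v)" using bconst_A assms inM_def by blast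
  fix y assume y: "K (blk y) = 1"
  have "mv (adj R c) v y = (\<Sum>b\<le>d. of_nat (nn c y b) * v (rep b))"
    using Ac_bc assms inM_def by blast
  also have "\<dots> = (\<Sum>b\<le>d. 0)"
  proof (intro sum.cong refl)
    fix b assume b: "b \<in> {..d}"
    show "of_nat (nn c y b) * v (rep b) = 0"
    proof (cases "K b = 1")
      case True then have "v (rep b) = 0" using assms(3) b blk_rep unfolding inM_def by auto
      then show ?thesis by simp
    next
      case False then have "K b = 2" using K12 b by auto
      then have "even (nn c y b)" using nn_even_12 b assms y by auto
      then show ?thesis using char2_nat0[OF c2] by simp
    qed
  qed
  finally show "mv (adj R c) v y = 0" by simp
qed

lemma inM_E: "a \<le> d \<Longrightarrow> inM v \<Longrightarrow> inM (\<lambda>y. if (x, y) \<in> R a then v y else 0)"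
  unfolding inM_def using bconst_E by auto

lemma inM_T: assumes c2: "(2::'f::field) = 0" and "s \<in> terwilliger R d x" "inM (v :: 'x \<Rightarrow> 'f)"
  shows "inM (mv s v)"
proof (rule T_stable[where P=inM, OF assms(2,3)])
  fix c u assume "c \<le> d" "inM (u :: 'x \<Rightarrow> 'f)"
  then show "inM (mv (adj R c) u)" using inM_A[OF c2] by blast
next
  fix a u assume "a \<le> d" "inM (u :: 'x \<Rightarrow> 'f)"
  then show "inM (\<lambda>y. if (x, y) \<in> R a then u y else 0)" using inM_E by blast
next
  show "inM (\<lambda>_. 0 :: 'f)" unfolding inM_def using bconst_0 by simp
next
  fix u w :: "'x \<Rightarrow> 'f" assume "inM u" "inM w"
  then show "inM (\<lambda>i. u i + w i)" unfolding inM_def by (auto intro: bconst_add)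
next
  fix c and u :: "'x \<Rightarrow> 'f" assume "inM u"
  then show "inM (\<lambda>i. c * u i)" unfolding inM_def by (auto intro: bconst_sm)
qed

lemma bconst_T: assumes "s \<in> terwilliger R d x" "bconst (v :: 'x \<Rightarrow> 'f::field)"
  shows "bconst (mv s v)"
proof (rule T_stable[where P=bconst, OF assms])
  fix c u assume "c \<le> d" "bconst (u :: 'x \<Rightarrow> 'f)"
  then show "bconst (mv (adj R c) u)" using bconst_A by blast
next
  fix a u assume "a \<le> d" "bconst (u :: 'x \<Rightarrow> 'f)"
  then show "bconst (\<lambda>y. if (x, y) \<in> R a then u y else 0)" using bconst_E by blast
qed (auto intro: bconst_0 bconst_add bconst_sm)

definition reach where "reach b0 a \<longleftrightarrow> step\<^sup>*\<^sup>* b0 a"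

lemma reach_K: assumes "step\<^sup>*\<^sup>* b0 a" "b0 \<le> d" "K b0 = 2" shows "a \<le> d \<and> K a = 2"
  using assms by (induction rule: rtranclp_induct) (auto simp: step_def)


definition inMC :: "nat \<Rightarrow> ('x \<Rightarrow> 'f::field) \<Rightarrow> bool" where
  "inMC b0 v \<longleftrightarrow> inM v \<and> (\<forall>y. \<not> step\<^sup>*\<^sup>* b0 (blk y) \<longrightarrow> v y = 0)"

lemma odd_step: assumes "blk y \<le> d" "b \<le> d" "c \<le> d" "K (blk y) = 2" "K b = 2" "odd (nn c y b)"
  shows "step (blk y) b"
proof -
  have "blk y = blk (rep (blk y))" using blk_rep[OF assms(1)] by simp
  then have "nn c y b = nn c (rep (blk y)) b" by (rule F1[OF assms(2,3)])
  then show ?thesis using assms unfolding step_def by auto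
qed

lemma inMC_A: assumes c2: "(2::'f::field) = 0" and "c \<le> d" "inMC b0 v" "b0 \<le> d" "K b0 = 2"
  shows "inMC b0 (mv (adj R c) (v :: 'x \<Rightarrow> 'f))"
  unfolding inMC_def
proof (intro conjI allI impI)
  show "inM (mv (adj R c) v)" using inM_A[OF c2] assms unfolding inMC_def by blast
  fix y assume y: "\<not> step\<^sup>*\<^sup>* b0 (blk y)"
  have "mv (adj R c) v y = (\<Sum>b\<le>d. of_nat (nn c y b) * v (rep b))"
    using Ac_bc assms inMC_def inM_def by blast
  also have "\<dots> = (\<Sum>b\<le>d. 0)"
  proof (intro sum.cong refl)
    fix b assume b: "b \<in> {..d}"
    show "of_nat (nn c y b) * v (rep b) = 0"
    proof (cases "step\<^sup>*\<^sup>* b0 b")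
      case False then have "v (rep b) = 0" using assms(3) b blk_rep unfolding inMC_def by auto
      then show ?thesis by simp
    next
      case True then have Kb: "K b = 2" using reach_K assms by blast
      have "even (nn c y b)"
      proof (cases "K (blk y) = 1")
        case True then show ?thesis using nn_even_12 b assms Kb by auto
      next
        case False then have Ky: "K (blk y) = 2" using K12 blk by blast
        show ?thesis
        proof (rule ccontr)
          assume "odd (nn c y b)"
          then have "step (blk y) b" using odd_step blk Ky Kb b assms(2) by auto
          then have "step b (blk y)" by (rule step_sym)
          then have "step\<^sup>*\<^sup>* b0 (blk y)" by (rule rtranclp.rtrancl_into_rtrancl[OF True])
          then show False using y by simp
        qed
      qed
      then show ?thesis using char2_nat0[OF c2] by simp
    qed
  qed
  finally show "mv (adj R c) v y = 0" by simp
qed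

lemma inMC_T: assumes c2: "(2::'f::field) = 0" and "s \<in> terwilliger R d x" "inMC b0 (v :: 'x \<Rightarrow> 'f)"
  "b0 \<le> d" "K b0 = 2"
  shows "inMC b0 (mv s v)"
proof (rule T_stable[where P="inMC b0", OF assms(2,3)])
  fix c u assume "c \<le> d" "inMC b0 (u :: 'x \<Rightarrow> 'f)"
  then show "inMC b0 (mv (adj R c) u)" using inMC_A[OF c2] assms by blast
next
  fix a u assume "a \<le> d" "inMC b0 (u :: 'x \<Rightarrow> 'f)"
  then show "inMC b0 (\<lambda>y. if (x, y) \<in> R a then u y else 0)" unfolding inMC_def using inM_E by auto
next
  show "inMC b0 (\<lambda>_. 0 :: 'f)" unfolding inMC_def inM_def using bconst_0 by simp
next
  fix u w :: "'x \<Rightarrow> 'f" assume "inMC b0 u" "inMC b0 w"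
  then show "inMC b0 (\<lambda>i. u i + w i)" unfolding inMC_def inM_def by (auto intro: bconst_add)
next
  fix c and u :: "'x \<Rightarrow> 'f" assume "inMC b0 u"
  then show "inMC b0 (\<lambda>i. c * u i)" unfolding inMC_def inM_def by (auto intro: bconst_sm)
qed

definition sig :: "nat \<Rightarrow> ('x \<Rightarrow> 'f::field) \<Rightarrow> 'f" where
  "sig a v = (\<Sum>y\<in>Bl a. v y)"

lemma sig_A: assumes "a \<le> d" "c \<le> d"
  shows "sig a (mv (adj R c) v) = (\<Sum>b\<le>d. of_nat (mm c a (rep b)) * sig b (v :: 'x \<Rightarrow> 'f::field))"
proof -
  have "sig a (mv (adj R c) v) = (\<Sum>y\<in>Bl a. \<Sum>k\<in>UNIV. if (y, k) \<in> R c then v k else 0)"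
    unfolding sig_def mv_adj by simp
  also have "\<dots> = (\<Sum>k\<in>UNIV. \<Sum>y\<in>Bl a. if (y, k) \<in> R c then v k else 0)" by (rule sum.swap)
  also have "\<dots> = (\<Sum>k\<in>UNIV. of_nat (mm c a k) * v k)"
  proof (intro sum.cong refl)
    fix k
    have "(\<Sum>y\<in>Bl a. if (y, k) \<in> R c then v k else 0) = (\<Sum>y\<in>{y\<in>Bl a. (y, k) \<in> R c}. v k)"
      by (rule sum.inter_filter[symmetric]) simp
    also have "\<dots> = of_nat (mm c a k) * v k" by (simp add: mm_def)
    finally show "(\<Sum>y\<in>Bl a. if (y, k) \<in> R c then v k else 0) = of_nat (mm c a k) * v k" .
  qed
  also have "\<dots> = (\<Sum>b\<le>d. \<Sum>k\<in>Bl b. of_nat (mm c a k) * v k)" by (rule sum_blocks)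
  also have "\<dots> = (\<Sum>b\<le>d. of_nat (mm c a (rep b)) * sig b v)"
  proof (intro sum.cong refl)
    fix b assume b: "b \<in> {..d}"
    have "(\<Sum>k\<in>Bl b. of_nat (mm c a k) * v k) = (\<Sum>k\<in>Bl b. of_nat (mm c a (rep b)) * v k)"
    proof (intro sum.cong refl)
      fix k assume "k \<in> Bl b"
      then have "blk k = blk (rep b)" using Bl_iff blk_rep b by auto
      then have "mm c a k = mm c a (rep b)" by (rule F1'[OF assms])
      then show "of_nat (mm c a k) * v k = of_nat (mm c a (rep b)) * v k" by simp
    qed
    then show "(\<Sum>k\<in>Bl b. of_nat (mm c a k) * v k) = of_nat (mm c a (rep b)) * sig b v"
      by (simp add: sig_def sum_distrib_left)
  qed
  finally show ?thesis .
qed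

lemma sig_E: assumes "a \<le> d" "e \<le> d"
  shows "sig a (\<lambda>y. if (x, y) \<in> R e then v y else 0) = (if a = e then sig a v else (0::'f::field))"
proof (cases "a = e")
  case True
  have "(\<Sum>y\<in>Bl a. if (x, y) \<in> R e then v y else 0) = (\<Sum>y\<in>Bl a. v y)"
    using True by (intro sum.cong refl) (simp add: Bl_def)
  then show ?thesis using True by (simp add: sig_def)
next
  case False
  have "\<And>y. y \<in> Bl a \<Longrightarrow> (x, y) \<notin> R e" using Bl_iff mem_R_blk assms False by auto
  then show ?thesis using False unfolding sig_def by simp
qed

lemma sig_pair: assumes "Bl a = {p, q}" "p \<noteq> q" shows "sig a v = v p + v q"
  unfolding sig_def assms using assms(2) by simp

lemma N_sig: assumes c2: "(2::'f::field) = 0"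
  shows "bconst (v :: 'x \<Rightarrow> 'f) = (\<forall>a\<le>d. K a = 2 \<longrightarrow> sig a v = 0)"
proof
  assume bc: "bconst v"
  show "\<forall>a\<le>d. K a = 2 \<longrightarrow> sig a v = 0"
  proof (intro allI impI)
    fix a assume a: "a \<le> d" "K a = 2"
    obtain q where q: "q \<noteq> rep a" "Bl a = {rep a, q}" using K2_pair[OF a rep[OF a(1)]] by blast
    then have "blk q = blk (rep a)" using Bl_iff a blk_rep by auto
    then have "v q = v (rep a)" using bc unfolding bconst_def by blast
    moreover have "sig a v = v (rep a) + v q" using sig_pair[OF q(2)] q(1) by auto
    ultimately show "sig a v = 0" using char2_eq[OF c2, of "v (rep a)" "v q"] by simp
  qed
next
  assume h: "\<forall>a\<le>d. K a = 2 \<longrightarrow> sig a v = 0"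
  show "bconst v" unfolding bconst_def
  proof (intro allI impI)
    fix y z assume yz: "blk y = blk z"
    let ?a = "blk y"
    have z: "z \<in> Bl ?a" using yz blk by simp
    show "v y = v z"
    proof (cases "K ?a = 1")
      case True then show ?thesis using K1_single[OF blk(1) True blk(2)] z by simp
    next
      case False then have K2: "K ?a = 2" using K12 blk by blast
      obtain y' where y': "y' \<noteq> y" "Bl ?a = {y, y'}" using K2_pair[OF blk(1) K2 blk(2)] by blast
      show ?thesis
      proof (cases "z = y")
        case True then show ?thesis by simp
      next
        case False then have "z = y'" using z y' by auto
        moreover have "sig ?a v = 0" using h K2 blk by blast
        moreover have "sig ?a v = v y + v y'" using sig_pair[OF y'(2)] y'(1) by auto
        ultimately show ?thesis using char2_eq[OF c2, of "v y" "v y'"] by simp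
      qed
    qed
  qed
qed

definition inU :: "nat \<Rightarrow> ('x \<Rightarrow> 'f::field) \<Rightarrow> bool" where
  "inU b0 v \<longleftrightarrow> (\<forall>a\<le>d. K a = 2 \<longrightarrow> \<not> step\<^sup>*\<^sup>* b0 a \<longrightarrow> sig a v = 0)"

lemma inU_A: assumes c2: "(2::'f::field) = 0" and "c \<le> d" "inU b0 v" "b0 \<le> d" "K b0 = 2"
  shows "inU b0 (mv (adj R c) (v :: 'x \<Rightarrow> 'f))"
  unfolding inU_def
proof (intro allI impI)
  fix a assume a: "a \<le> d" "K a = 2" "\<not> step\<^sup>*\<^sup>* b0 a"
  have "sig a (mv (adj R c) v) = (\<Sum>b\<le>d. of_nat (mm c a (rep b)) * sig b v)"
    using sig_A a assms by blast
  also have "\<dots> = (\<Sum>b\<le>d. 0)"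
  proof (intro sum.cong refl)
    fix b assume b: "b \<in> {..d}"
    show "of_nat (mm c a (rep b)) * sig b v = 0"
    proof (cases "K b = 1")
      case True then have "even (mm c a (rep b))" using mm_even_21 a b assms by auto
      then show ?thesis using char2_nat0[OF c2] by simp
    next
      case False then have Kb: "K b = 2" using K12 b by auto
      show ?thesis
      proof (cases "step\<^sup>*\<^sup>* b0 b")
        case False then have "sig b v = 0" using assms(3) b Kb unfolding inU_def by auto
        then show ?thesis by simp
      next
        case True
        have "even (mm c a (rep b))"
        proof (rule ccontr)
          assume "odd (mm c a (rep b))"
          then have "odd (nn c (rep a) b)" using nn_mm_22 a b Kb assms(2) by simp
          then have "step a b" using a b Kb assms(2) unfolding step_def by auto
          then have "step b a" by (rule step_sym)
          then have "step\<^sup>*\<^sup>* b0 a" by (rule rtranclp.rtrancl_into_rtrancl[OF True])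
          then show False using a by simp
        qed
        then show ?thesis using char2_nat0[OF c2] by simp
      qed
    qed
  qed
  finally show "sig a (mv (adj R c) v) = 0" by simp
qed

lemma inU_T: assumes c2: "(2::'f::field) = 0" and "s \<in> terwilliger R d x" "inU b0 (v :: 'x \<Rightarrow> 'f)"
  "b0 \<le> d" "K b0 = 2"
  shows "inU b0 (mv s v)"
proof (rule T_stable[where P="inU b0", OF assms(2,3)])
  fix c u assume "c \<le> d" "inU b0 (u :: 'x \<Rightarrow> 'f)"
  then show "inU b0 (mv (adj R c) u)" using inU_A[OF c2] assms by blast
next
  fix a u assume "a \<le> d" "inU b0 (u :: 'x \<Rightarrow> 'f)"
  then show "inU b0 (\<lambda>y. if (x, y) \<in> R a then u y else 0)" unfolding inU_def by (auto simp: sig_E)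
next
  show "inU b0 (\<lambda>_. 0 :: 'f)" unfolding inU_def sig_def by simp
next
  fix u w :: "'x \<Rightarrow> 'f" assume "inU b0 u" "inU b0 w"
  then show "inU b0 (\<lambda>i. u i + w i)" unfolding inU_def sig_def by (simp add: sum.distrib)
next
  fix c and u :: "'x \<Rightarrow> 'f" assume "inU b0 u"
  then show "inU b0 (\<lambda>i. c * u i)" unfolding inU_def sig_def by (simp add: sum_distrib_left[symmetric])
qed

end


context qts begin

lemma maxL:
  fixes u :: "'x \<Rightarrow> 'f::field" and P :: "('x \<Rightarrow> 'f) \<Rightarrow> bool"
  assumes P0: "P (\<lambda>_. 0)" and Padd: "\<And>v w. P v \<Longrightarrow> P w \<Longrightarrow> P (\<lambda>i. v i + w i)"
    and Psm: "\<And>c v. P v \<Longrightarrow> P (\<lambda>i. c * v i)"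
    and Pst: "\<And>s v. s \<in> terwilliger R d x \<Longrightarrow> P v \<Longrightarrow> P (mv s v)"
    and nu: "\<not> P u"
    and simple: "\<And>s. s \<in> terwilliger R d x \<Longrightarrow> \<not> P (mv s u) \<Longrightarrow>
        \<exists>r\<in>terwilliger R d x. P (\<lambda>i. mv r (mv s u) i - u i)"
  shows "maximal_left_ideal (terwilliger R d x) {s \<in> terwilliger R d x. P (mv s u)}"
proof -
  let ?T = "terwilliger R d x :: ('x, 'f) mat set"
  let ?L = "{s \<in> ?T. P (mv s u)}"
  have li: "left_ideal ?T ?L" unfolding left_ideal_def
  proof (intro conjI ballI)
    show "?L \<subseteq> ?T" by blast
    show "mzero \<in> ?L" using T_zero P0 by (simp add: mv_mzero)
  next
    fix A B assume "A \<in> ?L" "B \<in> ?L"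
    then show "madd A B \<in> ?L" by (simp add: mv_madd T_add Padd)
  next
    fix A assume "A \<in> ?L"
    then have PA: "P (mv A u)" and "A \<in> ?T" by auto
    from Psm[OF PA] have "P (\<lambda>i. (-1) * mv A u i)" .
    moreover have "mv (msmult (-1) A) u = (\<lambda>i. (-1) * mv A u i)" by (simp add: mv_msmult)
    ultimately show "msmult (-1) A \<in> ?L" using T_sm[OF \<open>A \<in> ?T\<close>] by simp
  next
    fix t A assume "t \<in> ?T" "A \<in> ?L"
    then show "mmul t A \<in> ?L" by (simp add: mv_mmul T_mult Pst)
  qed
  have ne: "?L \<noteq> ?T"
  proof
    assume "?L = ?T"
    then have "mone \<in> ?L" using T_one by blast
    then show False using nu by (simp add: mv_mone)
  qed
  show ?thesis unfolding maximal_left_ideal_def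
  proof (intro conjI allI impI li ne)
    fix L' assume h: "left_ideal ?T L' \<and> ?L \<subseteq> L'"
    show "L' = ?L \<or> L' = ?T"
    proof (cases "L' \<subseteq> ?L")
      case True then show ?thesis using h by blast
    next
      case False
      then obtain s where s: "s \<in> L'" "s \<notin> ?L" by blast
      have sT: "s \<in> ?T" using s h unfolding left_ideal_def by blast
      then have "\<not> P (mv s u)" using s by simp
      then obtain r where r: "r \<in> ?T" "P (\<lambda>i. mv r (mv s u) i - u i)" using simple sT by blast
      define q where "q = madd mone (msmult (-1) (mmul r s))"
      have qT: "q \<in> ?T" unfolding q_def by (intro T_add T_one T_sm T_mult r sT)
      have e: "mv q u = (\<lambda>i. (-1) * (mv r (mv s u) i - u i))"
        unfolding q_def by (simp add: mv_madd mv_msmult mv_mone mv_mmul algebra_simps)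
      have "P (mv q u)" using Psm[OF r(2), of "-1"] by (simp only: e)
      then have "q \<in> L'" using qT h by blast
      moreover have "mmul r s \<in> L'" using h r(1) s(1) unfolding left_ideal_def by blast
      ultimately have "madd q (mmul r s) \<in> L'" using h unfolding left_ideal_def by blast
      moreover have "madd q (mmul r s) = mone"
        unfolding q_def by (intro ext) (simp add: madd_def msmult_def)
      ultimately have one: "mone \<in> L'" by simp
      have "?T \<subseteq> L'"
      proof
        fix t assume "t \<in> ?T"
        then have "mmul t mone \<in> L'" using one h unfolding left_ideal_def by blast
        then show "t \<in> L'" by (simp add: mmul_mone_right)
      qed
      then show ?thesis using h unfolding left_ideal_def by blast
    qed
  qed
qed

lemma rad_sub: "maximal_left_ideal T L \<Longrightarrow> jacobson_radical T \<subseteq> L"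
  unfolding jacobson_radical_def by blast

definition ind :: "nat \<Rightarrow> 'x \<Rightarrow> 'f::field" where
  "ind a = (\<lambda>y. if (x, y) \<in> R a then 1 else 0)"

definition ev :: "'x \<Rightarrow> 'x \<Rightarrow> 'f::field" where
  "ev z = (\<lambda>y. if y = z then 1 else 0)"

lemma bconst_ind: "e \<le> d \<Longrightarrow> bconst (ind e)"
  unfolding bconst_def ind_def by (simp add: mem_R_blk)

lemma A_ind: assumes "c \<le> d" "e \<le> d"
  shows "mv (adj R c) (ind e) y = (of_nat (nn c y e) :: 'f::field)"
proof -
  have "mv (adj R c) (ind e) y = (\<Sum>b\<le>d. of_nat (nn c y b) * (ind e (rep b) :: 'f))"
    using Ac_bc bconst_ind assms(2) by blast
  also have "\<dots> = (\<Sum>b\<le>d. if b = e then of_nat (nn c y b) else 0)"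
  proof (intro sum.cong refl)
    fix b assume "b \<in> {..d}"
    then have "ind e (rep b) = (if b = e then 1 else (0::'f))"
      unfolding ind_def using mem_R_blk assms(2) blk_rep by auto
    then show "of_nat (nn c y b) * (ind e (rep b) :: 'f) = (if b = e then of_nat (nn c y b) else 0)" by simp
  qed
  also have "\<dots> = of_nat (nn c y e)" using assms(2) by simp
  finally show ?thesis .
qed

lemma L1: assumes c2: "(2::'f::field) = 0" and "step\<^sup>*\<^sup>* a b"
  shows "\<exists>r\<in>terwilliger R d x. mv r (ind b) = (ind a :: 'x \<Rightarrow> 'f)"
  using assms(2)
proof (induction rule: rtranclp_induct)
  case base then show ?case by (rule bexI[of _ mone]) (simp_all add: mv_mone T_one)
next
  case (step b e)
  then obtain r where r: "r \<in> terwilliger R d x" "mv r (ind b) = (ind a :: 'x \<Rightarrow> 'f)" by blast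
  from step(2) obtain c where c: "b \<le> d" "e \<le> d" "K b = 2" "K e = 2" "c \<le> d" "odd (nn c (rep b) e)"
    unfolding step_def by blast
  let ?s = "mmul (dual_idem R x b) (adj R c)"
  have "mv ?s (ind e) = (ind b :: 'x \<Rightarrow> 'f)"
  proof
    fix y
    show "mv ?s (ind e) y = (ind b :: 'x \<Rightarrow> 'f) y"
    proof (cases "(x, y) \<in> R b")
      case True
      then have "blk y = blk (rep b)" using mem_R_blk c blk_rep by auto
      then have "nn c y e = nn c (rep b) e" by (rule F1[OF c(2,5)])
      then have "(of_nat (nn c y e) :: 'f) = 1" using char2_nat1[OF c2] c(6) by simp
      moreover have "mv ?s (ind e :: 'x \<Rightarrow> 'f) y = mv (adj R c) (ind e) y" using True by (simp add: mv_mmul mv_E)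
      moreover have "(ind b y :: 'f) = 1" using True by (simp add: ind_def)
      moreover have "mv (adj R c) (ind e :: 'x \<Rightarrow> 'f) y = (of_nat (nn c y e) :: 'f)" by (rule A_ind[OF c(5,2)])
      ultimately show ?thesis by simp
    next
      case False then show ?thesis by (simp add: mv_mmul mv_E ind_def)
    qed
  qed
  then have "mv (mmul r ?s) (ind e) = ind a" using r by (simp add: mv_mmul)
  moreover have "mmul r ?s \<in> terwilliger R d x" using r c by (intro T_mult T_E T_A)
  ultimately show ?case by blast
qed

lemma inMC_ind: assumes "b0 \<le> d" "K b0 = 2" shows "inMC b0 (ind b0 :: 'x \<Rightarrow> 'f::field)"
  unfolding inMC_def inM_def
proof (intro conjI allI impI)
  show "bconst (ind b0 :: 'x \<Rightarrow> 'f)" using bconst_ind assms by blast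
  fix y
  show "K (blk y) = 1 \<Longrightarrow> (ind b0 y :: 'f) = 0" using assms mem_R_blk unfolding ind_def by auto
  show "\<not> step\<^sup>*\<^sup>* b0 (blk y) \<Longrightarrow> (ind b0 y :: 'f) = 0" using assms mem_R_blk unfolding ind_def by auto
qed

lemma fam1: assumes c2: "(2::'f::field) = 0" and b0: "b0 \<le> d" "K b0 = 2"
  and t: "t \<in> jacobson_radical (terwilliger R d x :: ('x, 'f) mat set)"
  shows "mv t (ind b0) = (\<lambda>_. 0)"
proof -
  let ?P = "\<lambda>v::'x \<Rightarrow> 'f. v = (\<lambda>_. 0)"
  have "maximal_left_ideal (terwilliger R d x) {s \<in> terwilliger R d x. ?P (mv s (ind b0))}"
  proof (rule maxL)
    show "\<And>s v. s \<in> terwilliger R d x \<Longrightarrow> ?P v \<Longrightarrow> ?P (mv s v)" by (simp add: mv_zero_vec)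
    show "\<not> ?P (ind b0)"
    proof
      assume "ind b0 = (\<lambda>_. 0 :: 'f)"
      then have "ind b0 (rep b0) = (0::'f)" by simp
      then show False using rep[OF b0(1)] unfolding ind_def Bl_def by simp
    qed
  next
    fix s assume sT: "s \<in> terwilliger R d x" and nz: "\<not> ?P (mv s (ind b0))"
    let ?w = "mv s (ind b0)"
    have w: "inMC b0 ?w" using inMC_T[OF c2 sT inMC_ind[OF b0] b0] .
    obtain y where y: "?w y \<noteq> 0" using nz by auto
    let ?a = "blk y"
    have ra: "step\<^sup>*\<^sup>* b0 ?a" using w y unfolding inMC_def by blast
    obtain r0 where r0: "r0 \<in> terwilliger R d x" "mv r0 (ind ?a) = (ind b0 :: 'x \<Rightarrow> 'f)"
      using L1[OF c2 ra] by blast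
    let ?r = "mmul r0 (msmult (inverse (?w y)) (dual_idem R x ?a))"
    have "(\<lambda>i. inverse (?w y) * (if (x, i) \<in> R ?a then ?w i else 0)) = ind ?a"
    proof
      fix i show "inverse (?w y) * (if (x, i) \<in> R ?a then ?w i else 0) = ind ?a i"
      proof (cases "(x, i) \<in> R ?a")
        case True
        then have "blk i = blk y" using mem_R_blk blk by auto
        then have "?w i = ?w y" using w unfolding inMC_def inM_def bconst_def by blast
        then show ?thesis using True y unfolding ind_def by simp
      qed (simp add: ind_def)
    qed
    then have "mv ?r ?w = ind b0" using r0 by (simp add: mv_mmul mv_msmult mv_E)
    moreover have "?r \<in> terwilliger R d x" using r0 blk by (intro T_mult T_sm T_E) auto
    ultimately show "\<exists>r\<in>terwilliger R d x. ?P (\<lambda>i. mv r (mv s (ind b0)) i - ind b0 i)"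
      by (intro bexI[of _ ?r]) auto
  qed auto
  then show ?thesis using t rad_sub by blast
qed

end


context qts begin

lemma inM_0: "inM (\<lambda>_. 0)" unfolding inM_def using bconst_0 by simp
lemma inM_add: "inM u \<Longrightarrow> inM w \<Longrightarrow> inM (\<lambda>i. u i + w i)" unfolding inM_def by (auto intro: bconst_add)
lemma inM_sm: "inM u \<Longrightarrow> inM (\<lambda>i. c * u i)" unfolding inM_def by (auto intro: bconst_sm)

lemma mv_ev: "mv A (ev z) = (\<lambda>i. A i z)"
  unfolding mv_def ev_def by (intro ext) (simp add: ifmul2)

lemma sig_ev: "a \<le> d \<Longrightarrow> sig a (ev z) = (if blk z = a then 1 else (0::'f::field))"
  unfolding sig_def ev_def using Bl_iff by simp

lemma bconst_ev1: "K (blk y0) = 1 \<Longrightarrow> bconst (ev y0)"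
  unfolding bconst_def ev_def
proof (intro allI impI)
  fix y z assume K: "K (blk y0) = 1" and yz: "blk y = blk z"
  have "\<And>y. y \<in> Bl (blk y0) = (y = y0)" using K1_single[OF blk(1) K blk(2)] by auto
  then have "\<And>y. (blk y = blk y0) = (y = y0)" using Bl_iff blk by blast
  then show "(if y = y0 then 1 else 0) = (if z = y0 then 1 else 0)" using yz by metis
qed

lemma fam2: assumes c2: "(2::'f::field) = 0" and y0: "K (blk y0) = 1"
  and t: "t \<in> jacobson_radical (terwilliger R d x :: ('x, 'f) mat set)"
  shows "inM (mv t (ev y0))"
proof -
  have "maximal_left_ideal (terwilliger R d x) {s \<in> terwilliger R d x. inM (mv s (ev y0 :: 'x \<Rightarrow> 'f))}"
  proof (rule maxL)
    show "inM (\<lambda>_. 0 :: 'f)" by (rule inM_0)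
    show "\<And>v w. inM v \<Longrightarrow> inM w \<Longrightarrow> inM (\<lambda>i. v i + w i :: 'f)" by (rule inM_add)
    show "\<And>c v. inM v \<Longrightarrow> inM (\<lambda>i. c * v i :: 'f)" by (rule inM_sm)
    show "\<And>s v. s \<in> terwilliger R d x \<Longrightarrow> inM v \<Longrightarrow> inM (mv s (v :: 'x \<Rightarrow> 'f))" using inM_T[OF c2] by blast
    show "\<not> inM (ev y0 :: 'x \<Rightarrow> 'f)" using y0 unfolding inM_def ev_def by auto
  next
    fix s assume sT: "s \<in> terwilliger R d x" and nz: "\<not> inM (mv s (ev y0 :: 'x \<Rightarrow> 'f))"
    let ?w = "mv s (ev y0 :: 'x \<Rightarrow> 'f)"
    have "bconst ?w" using bconst_T[OF sT bconst_ev1[OF y0]] .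
    then obtain y1 where y1: "K (blk y1) = 1" "?w y1 \<noteq> 0" using nz unfolding inM_def by blast
    define c where "c = rel (y0, y1)"
    have c: "c \<le> d" "(y0, y1) \<in> R c" using rel unfolding c_def by auto
    have B1: "\<And>i. ((x, i) \<in> R (blk y1)) = (i = y1)"
      using K1_single[OF blk(1) y1(1) blk(2)] unfolding Bl_def by auto
    have B0: "\<And>i. ((x, i) \<in> R (blk y0)) = (i = y0)"
      using K1_single[OF blk(1) y0 blk(2)] unfolding Bl_def by auto
    let ?r = "mmul (dual_idem R x (blk y0)) (mmul (adj R c) (msmult (inverse (?w y1)) (dual_idem R x (blk y1))))"
    have v1: "mv (msmult (inverse (?w y1)) (dual_idem R x (blk y1))) ?w = ev y1"
      unfolding mv_msmult mv_E B1 using y1(2) by (intro ext) (simp add: ev_def[of y1])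
    have "mv ?r ?w = mv (dual_idem R x (blk y0)) (mv (adj R c) (ev y1))" by (simp only: mv_mmul v1)
    also have "\<dots> = ev y0"
      unfolding mv_ev mv_E B0 using c(2) by (intro ext) (simp add: ev_def adj_def)
    finally have "mv ?r ?w = ev y0" .
    moreover have "?r \<in> terwilliger R d x" using c blk by (intro T_mult T_sm T_E T_A) auto
    ultimately show "\<exists>r\<in>terwilliger R d x. inM (\<lambda>i. mv r (mv s (ev y0)) i - ev y0 i :: 'f)"
      using inM_0 by (intro bexI[of _ ?r]) auto
  qed
  then show ?thesis using t rad_sub by blast
qed

lemma L3: assumes c2: "(2::'f::field) = 0" and a: "a \<le> d" and st: "step\<^sup>*\<^sup>* a b"
  shows "\<exists>s\<in>terwilliger R d x. \<forall>v::'x \<Rightarrow> 'f. (\<forall>y. blk y \<noteq> a \<longrightarrow> mv s v y = 0) \<and> sig a (mv s v) = sig b v"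
  using st
proof (induction rule: rtranclp_induct)
  case base
  have "\<forall>v::'x \<Rightarrow> 'f. (\<forall>y. blk y \<noteq> a \<longrightarrow> mv (dual_idem R x a) v y = 0) \<and> sig a (mv (dual_idem R x a) v) = sig a v"
  proof (rule allI, rule conjI)
    fix v :: "'x \<Rightarrow> 'f"
    show "\<forall>y. blk y \<noteq> a \<longrightarrow> mv (dual_idem R x a) v y = 0" using a by (simp add: mv_E mem_R_blk)
    show "sig a (mv (dual_idem R x a) v) = sig a v" using a by (simp add: mv_E sig_E)
  qed
  then show ?case using T_E[OF a] by blast
next
  case (step b e)
  then obtain s where s: "s \<in> terwilliger R d x"
    "\<And>v::'x \<Rightarrow> 'f. (\<forall>y. blk y \<noteq> a \<longrightarrow> mv s v y = 0) \<and> sig a (mv s v) = sig b v" by blast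
  from step(2) obtain c where c: "b \<le> d" "e \<le> d" "K b = 2" "K e = 2" "c \<le> d" "odd (nn c (rep b) e)"
    unfolding step_def by blast
  let ?s2 = "mmul (dual_idem R x b) (mmul (adj R c) (dual_idem R x e))"
  have one: "(of_nat (mm c b (rep e)) :: 'f) = 1"
    using nn_mm_22[OF c(1,2,5,3,4)] c(6) char2_nat1[OF c2] by simp
  have s2: "sig b (mv ?s2 v) = sig e v" for v :: "'x \<Rightarrow> 'f"
  proof -
    have "sig b (mv ?s2 v) = sig b (mv (adj R c) (mv (dual_idem R x e) v))"
      by (simp add: mv_mmul mv_E sig_E c)
    also have "\<dots> = (\<Sum>b'\<le>d. of_nat (mm c b (rep b')) * sig b' (mv (dual_idem R x e) v))"
      by (rule sig_A[OF c(1,5)])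
    also have "\<dots> = (\<Sum>b'\<le>d. if b' = e then of_nat (mm c b (rep b')) * sig e v else 0)"
      by (intro sum.cong refl) (simp add: mv_E sig_E c)
    also have "\<dots> = of_nat (mm c b (rep e)) * sig e v" using c(2) by simp
    finally show ?thesis using one by simp
  qed
  have "\<forall>v::'x \<Rightarrow> 'f. (\<forall>y. blk y \<noteq> a \<longrightarrow> mv (mmul s ?s2) v y = 0) \<and> sig a (mv (mmul s ?s2) v) = sig e v"
    using s(2) s2 by (simp add: mv_mmul)
  moreover have "mmul s ?s2 \<in> terwilliger R d x" using s c by (intro T_mult T_E T_A) auto
  ultimately show ?case by blast
qed

lemma sig_lin: "sig a (\<lambda>i. c * f i - g i) = c * sig a f - sig a (g :: 'x \<Rightarrow> 'f::field)"
  unfolding sig_def by (simp add: sum_subtractf sum_distrib_left)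

lemma fam3: assumes c2: "(2::'f::field) = 0" and z0: "K (blk z0) = 2"
  and t: "t \<in> jacobson_radical (terwilliger R d x :: ('x, 'f) mat set)"
  shows "bconst (mv t (ev z0))"
proof -
  let ?b0 = "blk z0"
  have b0: "?b0 \<le> d" by (rule blk)
  have uU: "inU ?b0 (ev z0 :: 'x \<Rightarrow> 'f)" unfolding inU_def
  proof (intro allI impI)
    fix a assume a: "a \<le> d" "K a = 2" "\<not> step\<^sup>*\<^sup>* ?b0 a"
    then have "a \<noteq> ?b0" by auto
    then show "sig a (ev z0 :: 'x \<Rightarrow> 'f) = 0" using sig_ev[where 'f='f, OF a(1)] by simp
  qed
  have "maximal_left_ideal (terwilliger R d x) {s \<in> terwilliger R d x. bconst (mv s (ev z0 :: 'x \<Rightarrow> 'f))}"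
  proof (rule maxL)
    show "bconst (\<lambda>_. 0 :: 'f)" by (rule bconst_0)
    show "\<And>v w. bconst v \<Longrightarrow> bconst w \<Longrightarrow> bconst (\<lambda>i. v i + w i :: 'f)" by (rule bconst_add)
    show "\<And>c v. bconst v \<Longrightarrow> bconst (\<lambda>i. c * v i :: 'f)" by (rule bconst_sm)
    show "\<And>s v. s \<in> terwilliger R d x \<Longrightarrow> bconst v \<Longrightarrow> bconst (mv s (v :: 'x \<Rightarrow> 'f))" using bconst_T by blast
    show "\<not> bconst (ev z0 :: 'x \<Rightarrow> 'f)"
    proof
      assume bc: "bconst (ev z0 :: 'x \<Rightarrow> 'f)"
      obtain z' where z': "z' \<noteq> z0" "Bl ?b0 = {z0, z'}" using K2_pair[OF b0 z0 blk(2)] by blast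
      then have "blk z' = ?b0" using Bl_iff b0 by auto
      then have "(ev z0 z' :: 'f) = ev z0 z0" using bc unfolding bconst_def by metis
      then show False using z'(1) unfolding ev_def by simp
    qed
  next
    fix s assume sT: "s \<in> terwilliger R d x" and nz: "\<not> bconst (mv s (ev z0 :: 'x \<Rightarrow> 'f))"
    let ?w = "mv s (ev z0 :: 'x \<Rightarrow> 'f)"
    have wU: "inU ?b0 ?w" by (rule inU_T[OF c2 sT uU b0 z0])
    obtain a where a: "a \<le> d" "K a = 2" "sig a ?w \<noteq> 0" using nz N_sig[OF c2, of ?w] by blast
    have ra: "step\<^sup>*\<^sup>* ?b0 a" using wU a unfolding inU_def by blast
    obtain s' where s': "s' \<in> terwilliger R d x"
      "\<And>v::'x \<Rightarrow> 'f. (\<forall>y. blk y \<noteq> ?b0 \<longrightarrow> mv s' v y = 0) \<and> sig ?b0 (mv s' v) = sig a v"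
      using L3[OF c2 b0 ra] by blast
    let ?r = "msmult (inverse (sig a ?w)) s'"
    let ?D = "\<lambda>i. mv ?r ?w i - ev z0 i"
    have "bconst ?D" unfolding N_sig[OF c2]
    proof (intro allI impI)
      fix a' assume a': "a' \<le> d" "K a' = 2"
      have "sig a' ?D = inverse (sig a ?w) * sig a' (mv s' ?w) - sig a' (ev z0)"
        unfolding mv_msmult by (rule sig_lin)
      also have "\<dots> = 0"
      proof (cases "a' = ?b0")
        case True
        then show ?thesis using s'(2)[of ?w] a(3) sig_ev[where 'f='f, OF a'(1), of z0] by simp
      next
        case False
        have "sig a' (mv s' ?w) = 0" unfolding sig_def
        proof (rule sum.neutral, rule ballI)
          fix y assume "y \<in> Bl a'"
          then have "blk y \<noteq> ?b0" using Bl_iff a' False by auto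
          then show "mv s' ?w y = 0" using s'(2) by blast
        qed
        then show ?thesis using False sig_ev[where 'f='f, OF a'(1), of z0] by simp
      qed
      finally show "sig a' ?D = 0" .
    qed
    moreover have "?r \<in> terwilliger R d x" using s' by (intro T_sm) auto
    ultimately show "\<exists>r\<in>terwilliger R d x. bconst (\<lambda>i. mv r (mv s (ev z0)) i - ev z0 i :: 'f)"
      by blast
  qed
  then show ?thesis using t rad_sub by blast
qed

end


context qts begin

definition Qm :: "('x, 'f::field) mat \<Rightarrow> bool" where
  "Qm t \<longleftrightarrow> (\<forall>i i' j j'. blk i = blk i' \<longrightarrow> blk j = blk j' \<longrightarrow> t i j = t i' j') \<and>
     (\<forall>i j. K (blk i) = 1 \<longrightarrow> K (blk j) = 1 \<longrightarrow> t i j = 0)"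

lemma QmD1: "Qm t \<Longrightarrow> blk i = blk i' \<Longrightarrow> blk j = blk j' \<Longrightarrow> t i j = t i' j'"
  unfolding Qm_def by blast
lemma QmD2: "Qm t \<Longrightarrow> K (blk i) = 1 \<Longrightarrow> K (blk j) = 1 \<Longrightarrow> t i j = 0"
  unfolding Qm_def by blast
lemma QmI: "(\<And>i i' j j'. blk i = blk i' \<Longrightarrow> blk j = blk j' \<Longrightarrow> t i j = t i' j') \<Longrightarrow>
  (\<And>i j. K (blk i) = 1 \<Longrightarrow> K (blk j) = 1 \<Longrightarrow> t i j = 0) \<Longrightarrow> Qm t"
  unfolding Qm_def by blast

lemma mv_ind: "mv t (ind b) i = sig b (\<lambda>k. t i k)"
proof -
  have "mv t (ind b) i = (\<Sum>k\<in>UNIV. if (x, k) \<in> R b then t i k else 0)"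
    unfolding mv_def ind_def by (intro sum.cong refl) simp
  also have "\<dots> = (\<Sum>k\<in>{k\<in>UNIV. (x, k) \<in> R b}. t i k)" by (rule sum.inter_filter[symmetric]) simp
  finally show ?thesis unfolding sig_def Bl_def by simp
qed

lemma rad_Q: assumes c2: "(2::'f::field) = 0"
  and t: "t \<in> jacobson_radical (terwilliger R d x :: ('x, 'f) mat set)"
  shows "Qm t"
proof -
  have col: "bconst (\<lambda>i. t i j)" for j
  proof (cases "K (blk j) = 1")
    case True
    then have "inM (mv t (ev j))" using fam2[OF c2 _ t] by blast
    then show ?thesis unfolding inM_def mv_ev by blast
  next
    case False then have "K (blk j) = 2" using K12 blk by blast
    then have "bconst (mv t (ev j))" using fam3[OF c2 _ t] by blast
    then show ?thesis unfolding mv_ev .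
  qed
  have thin: "t i j = 0" if "K (blk i) = 1" "K (blk j) = 1" for i j
  proof -
    have "inM (mv t (ev j))" using fam2[OF c2 that(2) t] .
    then show ?thesis using that(1) unfolding inM_def mv_ev by blast
  qed
  have row: "t i j = t i j'" if "blk j = blk j'" for i j j'
  proof -
    have j': "j' \<in> Bl (blk j)" using that blk by simp
    show ?thesis
    proof (cases "K (blk j) = 1")
      case True then show ?thesis using K1_single[OF blk(1) True blk(2)] j' by simp
    next
      case False then have K2: "K (blk j) = 2" using K12 blk by blast
      show ?thesis
      proof (cases "j' = j")
        case True then show ?thesis by simp
      next
        case False
        obtain j'' where j'': "j'' \<noteq> j" "Bl (blk j) = {j, j''}" using K2_pair[OF blk(1) K2 blk(2)] by blast
        then have "j' = j''" using j' False by auto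
        have "mv t (ind (blk j)) = (\<lambda>_. 0)" using fam1[OF c2 blk(1) K2 t] .
        then have "sig (blk j) (\<lambda>k. t i k) = 0" using mv_ind[of t "blk j" i] by simp
        moreover have "sig (blk j) (\<lambda>k. t i k) = t i j + t i j''"
          using sig_pair[OF j''(2), where v="\<lambda>k. t i k"] j''(1) by auto
        ultimately have "t i j + t i j' = 0" using \<open>j' = j''\<close> by simp
        then show ?thesis using char2_eq[OF c2] by simp
      qed
    qed
  qed
  show ?thesis
  proof (rule QmI)
    fix i i' j j' assume h: "blk i = blk i'" "blk j = blk j'"
    have "t i j = t i' j" using col[of j] h(1) unfolding bconst_def by blast
    also have "\<dots> = t i' j'" using row[OF h(2)] .
    finally show "t i j = t i' j'" .
  qed (rule thin)
qed

definition Gs :: "('x, 'f::field) mat set" where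
  "Gs = {mmul (mmul (dual_idem R x a) all_ones) (dual_idem R x b) | a b.
           a \<le> d \<and> b \<le> d \<and> max (K a) (K b) = 2}"

lemma EJ: "mmul (dual_idem R x a) all_ones = (\<lambda>i k. if (x, i) \<in> R a then 1 else (0::'f::field))"
proof (intro ext)
  fix i k
  show "mmul (dual_idem R x a) all_ones i k = (if (x, i) \<in> R a then 1 else (0::'f))"
  proof (cases "(x, i) \<in> R a")
    case True then show ?thesis unfolding mmul_def dual_idem_def all_ones_def by simp
  next
    case False then show ?thesis unfolding mmul_def dual_idem_def all_ones_def by simp
  qed
qed

lemma gen_entry: "mmul (mmul (dual_idem R x a) all_ones) (dual_idem R x b) =
   (\<lambda>i j. if (x, i) \<in> R a \<and> (x, j) \<in> R b then 1 else (0::'f::field))"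
proof (intro ext)
  fix i j
  show "mmul (mmul (dual_idem R x a) all_ones) (dual_idem R x b) i j =
     (if (x, i) \<in> R a \<and> (x, j) \<in> R b then 1 else (0::'f))"
  proof (cases "(x, j) \<in> R b")
    case True
    then have e: "\<And>k. (k = j \<and> (x, k) \<in> R b) = (k = j)" by auto
    show ?thesis using True unfolding EJ unfolding mmul_def dual_idem_def by (simp add: ifmul2 e)
  next
    case False
    then have e: "\<And>k. (k = j \<and> (x, k) \<in> R b) = False" by auto
    show ?thesis using False unfolding EJ unfolding mmul_def dual_idem_def by (simp add: e)
  qed
qed

lemma Q_span: assumes "Qm (t :: ('x, 'f::field) mat)" shows "t \<in> mspan Gs"
proof -
  define P where "P = {(a, b). a \<le> d \<and> b \<le> d \<and> max (K a) (K b) = 2}"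
  define g :: "nat \<times> nat \<Rightarrow> ('x, 'f) mat" where
    "g p = mmul (mmul (dual_idem R x (fst p)) all_ones) (dual_idem R x (snd p))" for p
  have gP: "g p i j = (if p = (blk i, blk j) then 1 else 0)" if pP: "p \<in> P" for p i j
  proof -
    obtain a b where p: "p = (a, b)" "a \<le> d" "b \<le> d" using pP unfolding P_def by auto
    show ?thesis unfolding g_def gen_entry using p mem_R_blk by auto
  qed
  have finP: "finite P"
    by (rule finite_subset[of _ "{..d} \<times> {..d}"]) (auto simp: P_def)
  have inj: "inj_on g P"
  proof (rule inj_onI)
    fix p p' assume h: "p \<in> P" "p' \<in> P" "g p = g p'"
    obtain a b where p: "p = (a, b)" "a \<le> d" "b \<le> d" using h(1) unfolding P_def by auto
    have "g p (rep a) (rep b) = 1" using gP[OF h(1)] p blk_rep by simp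
    then have "g p' (rep a) (rep b) = 1" using h(3) by simp
    then have "p' = (blk (rep a), blk (rep b))" using gP[OF h(2)] by (auto split: if_splits)
    then show "p = p'" using p blk_rep by simp
  qed
  have teq: "t = (\<lambda>i j. \<Sum>p\<in>P. t (rep (fst p)) (rep (snd p)) * g p i j)"
  proof (intro ext)
    fix i j
    have "(\<Sum>p\<in>P. t (rep (fst p)) (rep (snd p)) * g p i j) =
        (\<Sum>p\<in>P. if p = (blk i, blk j) then t (rep (fst p)) (rep (snd p)) else 0)"
      by (intro sum.cong refl) (simp add: gP)
    also have "\<dots> = (if (blk i, blk j) \<in> P then t (rep (blk i)) (rep (blk j)) else 0)"
      using finP by (simp add: sum.delta)
    also have "\<dots> = t i j"
    proof (cases "(blk i, blk j) \<in> P")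
      case True
      have "t (rep (blk i)) (rep (blk j)) = t i j"
        by (rule QmD1[OF assms]) (simp_all add: blk_rep blk)
      then show ?thesis using True by simp
    next
      case False
      then have "max (K (blk i)) (K (blk j)) \<noteq> 2" using blk(1) unfolding P_def by auto
      then have "K (blk i) = 1" "K (blk j) = 1" using K12[OF blk(1)[of i]] K12[OF blk(1)[of j]] by auto
      then show ?thesis using False QmD2[OF assms] by simp
    qed
    finally show "t i j = (\<Sum>p\<in>P. t (rep (fst p)) (rep (snd p)) * g p i j)" by simp
  qed
  define c where "c M = t (rep (fst (inv_into P g M))) (rep (snd (inv_into P g M)))" for M
  have "(\<lambda>i j. \<Sum>M\<in>g ` P. c M * M i j) = (\<lambda>i j. \<Sum>p\<in>P. c (g p) * g p i j)"
    by (intro ext) (simp add: sum.reindex[OF inj])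
  also have "\<dots> = (\<lambda>i j. \<Sum>p\<in>P. t (rep (fst p)) (rep (snd p)) * g p i j)"
    by (intro ext sum.cong refl) (simp add: c_def inv_into_f_f[OF inj])
  finally have "t = (\<lambda>i j. \<Sum>M\<in>g ` P. c M * M i j)" using teq by simp
  moreover have "g ` P \<subseteq> Gs"
  proof
    fix M assume "M \<in> g ` P"
    then obtain a b where ab: "M = g (a, b)" "a \<le> d" "b \<le> d" "max (K a) (K b) = 2"
      unfolding P_def by auto
    show "M \<in> Gs" unfolding Gs_def mem_Collect_eq
      by (intro exI[of _ a] exI[of _ b] conjI) (simp_all add: ab g_def)
  qed
  moreover have "finite (g ` P)" using finP by simp
  ultimately show ?thesis unfolding mspan_def by blast
qed

lemma sumA_T: "n \<le> d \<Longrightarrow> (\<lambda>i j. \<Sum>c\<le>n. adj R c i j) \<in> (terwilliger R d x :: ('x, 'f::field) mat set)"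
proof (induction n)
  case 0
  have "(\<lambda>i j. \<Sum>c\<le>0. adj R c i j) = (adj R 0 :: ('x, 'f) mat)" by simp
  moreover have "adj R 0 \<in> (terwilliger R d x :: ('x, 'f) mat set)" by (rule T_A) simp
  ultimately show ?case by simp
next
  case (Suc n)
  have "(\<lambda>i j. \<Sum>c\<le>Suc n. adj R c i j) = madd (\<lambda>i j. \<Sum>c\<le>n. adj R c i j) (adj R (Suc n) :: ('x, 'f) mat)"
    by (simp add: madd_def)
  moreover have "(\<lambda>i j. \<Sum>c\<le>n. adj R c i j) \<in> (terwilliger R d x :: ('x, 'f) mat set)" using Suc by simp
  moreover have "adj R (Suc n) \<in> (terwilliger R d x :: ('x, 'f) mat set)" by (rule T_A) (use Suc.prems in simp)
  ultimately show ?case by (simp add: T_add)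
qed

lemma J_T: "all_ones \<in> (terwilliger R d x :: ('x, 'f::field) mat set)"
proof -
  have "all_ones = (\<lambda>i j. \<Sum>c\<le>d. adj R c i j :: 'f)"
  proof (intro ext)
    fix i j
    have "(\<Sum>c\<le>d. adj R c i j :: 'f) = (\<Sum>c\<le>d. if c = rel (i, j) then 1 else 0)"
    proof (intro sum.cong refl)
      fix c assume "c \<in> {..d}"
      then have "((i, j) \<in> R c) = (c = rel (i, j))" using rel rel_unique by auto
      then show "(adj R c i j :: 'f) = (if c = rel (i, j) then 1 else 0)" unfolding adj_def by simp
    qed
    also have "\<dots> = 1" using rel by simp
    finally show "all_ones i j = (\<Sum>c\<le>d. adj R c i j :: 'f)" unfolding all_ones_def by simp
  qed
  then show ?thesis using sumA_T[where 'f='f, of d] by simp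
qed

lemma Gs_T: "Gs \<subseteq> (terwilliger R d x :: ('x, 'f::field) mat set)"
proof
  fix g :: "('x, 'f) mat" assume "g \<in> Gs"
  then obtain a b where "g = mmul (mmul (dual_idem R x a) all_ones) (dual_idem R x b)" "a \<le> d" "b \<le> d"
    unfolding Gs_def by blast
  then show "g \<in> terwilliger R d x" by (simp add: T_mult T_E J_T)
qed

lemma Q_zero: "Qm mzero" unfolding Qm_def mzero_def by simp
lemma Q_add: assumes "Qm A" "Qm B" shows "Qm (madd A B)"
proof (rule QmI)
  fix i i' j j' assume "blk i = blk i'" "blk j = blk j'"
  then have "A i j = A i' j'" "B i j = B i' j'" using QmD1 assms by blast+
  then show "madd A B i j = madd A B i' j'" unfolding madd_def by simp
next
  fix i j assume "K (blk i) = 1" "K (blk j) = 1"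
  then have "A i j = 0" "B i j = 0" using QmD2 assms by blast+
  then show "madd A B i j = 0" unfolding madd_def by simp
qed
lemma Q_sm: assumes "Qm A" shows "Qm (msmult c A)"
proof (rule QmI)
  fix i i' j j' assume "blk i = blk i'" "blk j = blk j'"
  then have "A i j = A i' j'" using QmD1 assms by blast
  then show "msmult c A i j = msmult c A i' j'" unfolding msmult_def by simp
next
  fix i j assume "K (blk i) = 1" "K (blk j) = 1"
  then have "A i j = 0" using QmD2 assms by blast
  then show "msmult c A i j = 0" unfolding msmult_def by simp
qed

lemma Gs_Q: "Gs \<subseteq> {t :: ('x, 'f::field) mat. Qm t}"
proof
  fix g :: "('x, 'f) mat" assume "g \<in> Gs"
  then obtain a b where ab: "a \<le> d" "b \<le> d" "max (K a) (K b) = 2"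
    "g = (\<lambda>i j. if blk i = a \<and> blk j = b then 1 else 0)"
    unfolding Gs_def gen_entry using mem_R_blk by auto
  have "Qm g"
  proof (rule QmI)
    fix i i' j j' assume "blk i = blk i'" "blk j = blk j'"
    then show "g i j = g i' j'" using ab(4) by simp
  next
    fix i j assume "K (blk i) = 1" "K (blk j) = 1"
    then show "g i j = 0" using ab by auto
  qed
  then show "g \<in> {t. Qm t}" by simp
qed

lemma Q_left: assumes c2: "(2::'f::field) = 0" and "s \<in> terwilliger R d x" "Qm (q :: ('x, 'f) mat)"
  shows "Qm (mmul s q)"
  using assms(2,3) unfolding terwilliger_def
proof (rule gen_alg_stable_mat[where P=Qm])
  show "Qm (mzero :: ('x, 'f) mat)" by (rule Q_zero)
  show "\<And>u w. Qm u \<Longrightarrow> Qm w \<Longrightarrow> Qm (madd u (w :: ('x, 'f) mat))" by (rule Q_add)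
  show "\<And>c u. Qm u \<Longrightarrow> Qm (msmult c (u :: ('x, 'f) mat))" by (rule Q_sm)
next
  fix g u :: "('x, 'f) mat"
  assume g: "g \<in> {adj R a |a. a \<le> d} \<union> {dual_idem R x a |a. a \<le> d}" and u: "Qm u"
  have colc: "bconst (\<lambda>k. u k j)" for j unfolding bconst_def using QmD1[OF u] by blast
  show "Qm (mmul g u)"
  proof (cases "g \<in> {dual_idem R x a |a. a \<le> d}")
    case True
    then obtain a where a: "a \<le> d" "g = dual_idem R x a" by blast
    have e: "mmul g u i j = (if blk i = a then u i j else 0)" for i j
      unfolding mmul_col a(2) mv_E using mem_R_blk[OF a(1)] by simp
    show ?thesis
    proof (rule QmI)
      fix i i' j j' assume h: "blk i = blk i'" "blk j = blk j'"
      then show "mmul g u i j = mmul g u i' j'" unfolding e using QmD1[OF u h] by simp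
    next
      fix i j assume "K (blk i) = 1" "K (blk j) = 1"
      then have "u i j = 0" by (rule QmD2[OF u])
      then show "mmul g u i j = 0" unfolding e by simp
    qed
  next
    case False
    then obtain c where c: "c \<le> d" "g = adj R c" using g by blast
    have e: "mmul g u i j = (\<Sum>b\<le>d. of_nat (nn c i b) * u (rep b) j)" for i j
      unfolding mmul_col c(2) by (rule Ac_bc[OF colc])
    show ?thesis
    proof (rule QmI)
      fix i i' j j' assume h: "blk i = blk i'" "blk j = blk j'"
      show "mmul g u i j = mmul g u i' j'" unfolding e
      proof (intro sum.cong refl)
        fix b assume b: "b \<in> {..d}"
        have "nn c i b = nn c i' b" using F1[OF _ c(1) h(1)] b by simp
        moreover have "u (rep b) j = u (rep b) j'" using QmD1[OF u refl h(2)] .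
        ultimately show "of_nat (nn c i b) * u (rep b) j = of_nat (nn c i' b) * u (rep b) j'" by simp
      qed
    next
      fix i j assume h: "K (blk i) = 1" "K (blk j) = 1"
      have "(\<Sum>b\<le>d. of_nat (nn c i b) * u (rep b) j) = (\<Sum>b\<le>d. (0::'f))"
      proof (intro sum.cong refl)
        fix b assume b: "b \<in> {..d}"
        show "of_nat (nn c i b) * u (rep b) j = 0"
        proof (cases "K b = 1")
          case True then have "u (rep b) j = 0" using QmD2[OF u _ h(2)] blk_rep b by simp
          then show ?thesis by simp
        next
          case False then have "K b = 2" using K12 b by auto
          then have "even (nn c i b)" using nn_even_12 b c(1) h(1) by auto
          then show ?thesis using char2_nat0[OF c2] by simp
        qed
      qed
      then show "mmul g u i j = 0" unfolding e by simp
    qed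
  qed
qed

lemma prod_formula: assumes "bconst (\<lambda>k. q1 i k * q2 k j)"
  shows "mmul q1 q2 i j = (\<Sum>b\<le>d. of_nat (K b) * (q1 i (rep b) * q2 (rep b) j :: 'f::field))"
proof -
  have "mmul q1 q2 i j = (\<Sum>b\<le>d. \<Sum>k\<in>Bl b. q1 i k * q2 k j)" unfolding mmul_def by (rule sum_blocks)
  also have "\<dots> = (\<Sum>b\<le>d. of_nat (K b) * (q1 i (rep b) * q2 (rep b) j))"
    by (intro sum.cong refl) (use sum_Bl_const[OF _ assms] in simp)
  finally show ?thesis .
qed

lemma prod_thin: assumes c2: "(2::'f::field) = 0" and "bconst (\<lambda>k. q1 i k * q2 k j)"
  and z: "\<And>b. b \<le> d \<Longrightarrow> K b = 1 \<Longrightarrow> q1 i (rep b) * q2 (rep b) j = 0"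
  shows "mmul q1 q2 i j = (0::'f)"
proof -
  have "mmul q1 q2 i j = (\<Sum>b\<le>d. of_nat (K b) * (q1 i (rep b) * q2 (rep b) j))"
    by (rule prod_formula) (rule assms(2))
  also have "\<dots> = (\<Sum>b\<le>d. (0::'f))"
  proof (intro sum.cong refl)
    fix b assume b: "b \<in> {..d}"
    show "of_nat (K b) * (q1 i (rep b) * q2 (rep b) j) = 0"
    proof (cases "K b = 1")
      case True then show ?thesis using z b by simp
    next
      case False then have "K b = 2" using K12 b by auto
      then show ?thesis using c2 by simp
    qed
  qed
  finally show ?thesis by simp
qed

lemma Q_cube: assumes c2: "(2::'f::field) = 0" and q: "Qm (q :: ('x, 'f) mat)"
  shows "mmul (mmul q q) q = mzero"
proof (intro ext)
  fix i j
  have bc: "bconst (\<lambda>k. q1 i k * q k j)" if "Qm q1" for q1 :: "('x, 'f) mat"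
    unfolding bconst_def
  proof (intro allI impI)
    fix k k' assume "blk k = blk k'"
    then have "q1 i k = q1 i k'" "q k j = q k' j" using QmD1[OF that refl] QmD1[OF q _ refl] by blast+
    then show "q1 i k * q k j = q1 i k' * q k' j" by simp
  qed
  have pq0: "mmul q q i' j' = 0" if "K (blk j') = 1" for i' j'
  proof (rule prod_thin[OF c2])
    show "bconst (\<lambda>k. q i' k * q k j')" unfolding bconst_def
    proof (intro allI impI)
      fix k k' assume "blk k = blk k'"
      then have "q i' k = q i' k'" "q k j' = q k' j'" using QmD1[OF q refl] QmD1[OF q _ refl] by blast+
      then show "q i' k * q k j' = q i' k' * q k' j'" by simp
    qed
    fix b assume "b \<le> d" "K b = 1"
    then have "q (rep b) j' = 0" using QmD2[OF q _ that] blk_rep by simp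
    then show "q i' (rep b) * q (rep b) j' = 0" by simp
  qed
  have "mmul (mmul q q) q i j = 0"
  proof (rule prod_thin[OF c2])
    show "bconst (\<lambda>k. mmul q q i k * q k j)" unfolding bconst_def
    proof (intro allI impI)
      fix k k' assume kk: "blk k = blk k'"
      have "mmul q q i k = mmul q q i k'" unfolding mmul_def
      proof (intro sum.cong refl)
        fix l show "q i l * q l k = q i l * q l k'" using QmD1[OF q refl kk] by simp
      qed
      moreover have "q k j = q k' j" using QmD1[OF q kk refl] .
      ultimately show "mmul q q i k * q k j = mmul q q i k' * q k' j" by simp
    qed
    fix b assume "b \<le> d" "K b = 1"
    then have "mmul q q i (rep b) = 0" using pq0 blk_rep by simp
    then show "mmul q q i (rep b) * q (rep b) j = 0" by simp
  qed
  then show "mmul (mmul q q) q i j = mzero i j" unfolding mzero_def by simp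
qed

lemma Q_in_max: assumes c2: "(2::'f::field) = 0"
  and L: "maximal_left_ideal (terwilliger R d x) L" and tT: "t \<in> terwilliger R d x" and tQ: "Qm (t :: ('x, 'f) mat)"
  shows "t \<in> L"
proof (rule ccontr)
  assume tL: "t \<notin> L"
  let ?T = "terwilliger R d x :: ('x, 'f) mat set"
  have Tz: "mzero \<in> ?T" and To: "mone \<in> ?T" by (rule T_zero, rule T_one)
  have Ta: "\<And>A B. A \<in> ?T \<Longrightarrow> B \<in> ?T \<Longrightarrow> madd A B \<in> ?T" by (rule T_add)
  have Tm: "\<And>A B. A \<in> ?T \<Longrightarrow> B \<in> ?T \<Longrightarrow> mmul A B \<in> ?T" by (rule T_mult)
  have Ts: "\<And>A c. A \<in> ?T \<Longrightarrow> msmult c A \<in> ?T" by (rule T_sm)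
  have li: "left_ideal ?T L" and LT: "L \<noteq> ?T"
    and mx: "\<And>L'. left_ideal ?T L' \<Longrightarrow> L \<subseteq> L' \<Longrightarrow> L' = L \<or> L' = ?T"
    using L unfolding maximal_left_ideal_def by blast+
  have LsT: "L \<subseteq> ?T" and L0: "mzero \<in> L" and Ladd: "\<And>A B. A \<in> L \<Longrightarrow> B \<in> L \<Longrightarrow> madd A B \<in> L"
    and Lneg: "\<And>A. A \<in> L \<Longrightarrow> msmult (-1) A \<in> L" and Lmul: "\<And>r A. r \<in> ?T \<Longrightarrow> A \<in> L \<Longrightarrow> mmul r A \<in> L"
    using li unfolding left_ideal_def by blast+
  define L' where "L' = {madd l (mmul s t) | l s. l \<in> L \<and> s \<in> ?T}"
  have li': "left_ideal ?T L'" unfolding left_ideal_def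
  proof (intro conjI ballI)
    show "L' \<subseteq> ?T" unfolding L'_def using LsT Ta Tm tT by blast
    have "mzero = madd mzero (mmul mzero t)" unfolding mmul_mzero_left by (intro ext) (simp add: madd_def mzero_def)
    then show "mzero \<in> L'" unfolding L'_def using L0 Tz by blast
  next
    fix A B assume "A \<in> L'" "B \<in> L'"
    then obtain l1 s1 l2 s2 where h: "A = madd l1 (mmul s1 t)" "l1 \<in> L" "s1 \<in> ?T"
      "B = madd l2 (mmul s2 t)" "l2 \<in> L" "s2 \<in> ?T" unfolding L'_def by blast
    have "madd A B = madd (madd l1 l2) (mmul (madd s1 s2) t)"
      unfolding h mmul_madd_left by (intro ext) (simp add: madd_def)
    then show "madd A B \<in> L'" unfolding L'_def using h Ladd Ta by blast
  next
    fix A assume "A \<in> L'"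
    then obtain l s where h: "A = madd l (mmul s t)" "l \<in> L" "s \<in> ?T" unfolding L'_def by blast
    have "msmult (-1) A = madd (msmult (-1) l) (mmul (msmult (-1) s) t)"
      unfolding h mmul_msmult_left by (intro ext) (simp add: madd_def msmult_def)
    then show "msmult (-1) A \<in> L'" unfolding L'_def using h Lneg Ts by blast
  next
    fix r A assume r: "r \<in> ?T" and "A \<in> L'"
    then obtain l s where h: "A = madd l (mmul s t)" "l \<in> L" "s \<in> ?T" unfolding L'_def by blast
    have "mmul r A = madd (mmul r l) (mmul (mmul r s) t)"
      unfolding h mmul_madd_right mmul_assoc ..
    then show "mmul r A \<in> L'" unfolding L'_def using h r Lmul Tm by blast
  qed
  have sub: "L \<subseteq> L'"
  proof
    fix l assume "l \<in> L"
    moreover have "l = madd l (mmul mzero t)" unfolding mmul_mzero_left by (intro ext) (simp add: madd_def mzero_def)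
    ultimately show "l \<in> L'" unfolding L'_def using Tz by blast
  qed
  have "t = madd mzero (mmul mone t)" unfolding mmul_mone_left by (intro ext) (simp add: madd_def mzero_def)
  then have "t \<in> L'" unfolding L'_def using L0 To by blast
  then have "L' = ?T" using mx[OF li' sub] tL by blast
  then have "mone \<in> L'" using To by blast
  then obtain l s where h: "mone = madd l (mmul s t)" "l \<in> L" "s \<in> ?T" unfolding L'_def by blast
  define q where "q = mmul s t"
  have qQ: "Qm q" unfolding q_def by (rule Q_left[OF c2 h(3) tQ])
  have q3: "mmul (mmul q q) q = mzero" by (rule Q_cube[OF c2 qQ])
  have pt: "mone i j = l i j + q i j" for i j
    using fun_cong[OF fun_cong[OF h(1)], of i j] unfolding q_def madd_def by simp
  have lq: "l = madd mone (msmult (-1) q)"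
    by (intro ext) (simp add: madd_def msmult_def pt)
  define w where "w = madd mone (madd q (mmul q q))"
  have wT: "w \<in> ?T" unfolding w_def q_def using h(3) tT by (intro Ta To Tm)
  have "mmul w q = madd q (madd (mmul q q) mzero)"
    unfolding w_def mmul_madd_left mmul_mone_left q3 ..
  then have "mmul w l = madd w (msmult (-1) (madd q (madd (mmul q q) mzero)))"
    unfolding lq mmul_madd_right mmul_mone_right mmul_msmult_right by simp
  also have "\<dots> = mone" unfolding w_def by (intro ext) (simp add: madd_def msmult_def mzero_def)
  finally have "mone \<in> L" using Lmul[OF wT h(2)] by simp
  then have "?T \<subseteq> L"
  proof -
    assume m1: "mone \<in> L"
    show "?T \<subseteq> L"
    proof
      fix t' assume "t' \<in> ?T"
      then have "mmul t' mone \<in> L" using Lmul m1 by blast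
      then show "t' \<in> L" by (simp add: mmul_mone_right)
    qed
  qed
  then show False using LT LsT by blast
qed

end

theorem theoremC:
  fixes R :: "nat \<Rightarrow> ('x::finite \<times> 'x) set" and d :: nat and x :: 'x
  assumes "CHAR('f::field) = 2"
    and "is_scheme R d"
    and "quasi_thin R d"
  shows "jacobson_radical (terwilliger R d x :: ('x, 'f) mat set) =
    mspan {mmul (mmul (dual_idem R x a) all_ones) (dual_idem R x b) | a b.
             a \<le> d \<and> b \<le> d \<and> max (valency R d a) (valency R d b) = 2}"
proof -
  have c2: "(2::'f) = 0" using of_nat_CHAR[where 'a='f] assms(1) by simp
  interpret qts R d x using assms(2,3) by unfold_locales
  have Geq: "{mmul (mmul (dual_idem R x a) all_ones) (dual_idem R x b) | a b.
             a \<le> d \<and> b \<le> d \<and> max (valency R d a) (valency R d b) = 2} = (Gs :: ('x, 'f) mat set)"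
    unfolding Gs_def using valency_K by metis
  show ?thesis unfolding Geq
  proof
    show "jacobson_radical (terwilliger R d x :: ('x, 'f) mat set) \<subseteq> mspan Gs"
      using rad_Q[OF c2] Q_span by blast
  next
    show "mspan Gs \<subseteq> jacobson_radical (terwilliger R d x :: ('x, 'f) mat set)"
    proof
      fix t :: "('x, 'f) mat" assume t: "t \<in> mspan Gs"
      have tT: "t \<in> terwilliger R d x"
        using mspan_sub[OF T_zero _ _ Gs_T] T_add T_sm t by blast
      have tQ: "t \<in> {t. Qm t}"
        using mspan_sub[of "{t. Qm t}", OF _ _ _ Gs_Q] Q_zero Q_add Q_sm t by blast
      show "t \<in> jacobson_radical (terwilliger R d x)"
        unfolding jacobson_radical_def using tT tQ Q_in_max[OF c2] by blast
    qed
  qed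
qed


end
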